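(* For the submodule $M=[(z-w)^2]$ of $H^2(\mathbb D^2)$, the core operator $C$ of $M$ is Hilbert–Schmidt and \[ \|C\|_{HS}^2=\operatorname{Tr}(C^2)=\frac{4}{3}\pi^2-9. \]
   Context: $H^2(\mathbb D^2)$ is the Hardy space on the unit bidisk with reproducing kernel $K(\lambda,z)=\frac{1}{(1-\overline{\lambda_1}z_1)(1-\overline{\lambda_2}z_2)}$. A submodule $M$ is a closed subspace invariant under multiplication by both coordinate functions; $[q]$ is the smallest submodule containing $q$. If $K^M$ is the reproducing kernel of $M$, the core function is $G^M(\lambda,z)=K^M(\lambda,z)/K(\lambda,z)$ and the core operator $C$ on $H^2(\mathbb D^2)$ is $(Cf)(z)=\int_{\mathbb T^2}G^M(\lambda,z)f(\lambda)\,dm(\lambda)$, $m$ the normalized Lebesgue measure on $\mathbb T^2$. Equivalently $C=I-R_1R_1^*-R_2R_2^*+R_1R_2R_1^*R_2^*$ on $M$ (and $0$ on $M^\perp$), where $R_1,R_2$ are multiplication by $z,w$ restricted to $M$. *)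

theory Defs
  imports "HOL-Analysis.Analysis"
begin

text \<open>H^2 of the bidisk is modelled isometrically by its Taylor coefficient
 sequences: f(z,w) = sum a(i,j) z^i w^j  corresponds to a :: nat \<times> nat \<Rightarrow> complex,
 with square-summable coefficients; the inner product is that of H^2.\<close>

type_synonym h2 = "nat \<times> nat \<Rightarrow> complex"

definition H2 :: "h2 set" where
  "H2 = {f. (\<lambda>k. (cmod (f k))\<^sup>2) summable_on UNIV}"

definition inner2 :: "h2 \<Rightarrow> h2 \<Rightarrow> complex" where
  "inner2 f g = (\<Sum>\<^sub>\<infinity>k. f k * cnj (g k))"

definition norm2 :: "h2 \<Rightarrow> real" where
  "norm2 f = sqrt (\<Sum>\<^sub>\<infinity>k. (cmod (f k))\<^sup>2)"

definition mult_z :: "h2 \<Rightarrow> h2" where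
  "mult_z f = (\<lambda>(i,j). if i = 0 then 0 else f (i - 1, j))"
definition mult_w :: "h2 \<Rightarrow> h2" where
  "mult_w f = (\<lambda>(i,j). if j = 0 then 0 else f (i, j - 1))"
definition mult_z_adj :: "h2 \<Rightarrow> h2" where
  "mult_z_adj f = (\<lambda>(i,j). f (i + 1, j))"
definition mult_w_adj :: "h2 \<Rightarrow> h2" where
  "mult_w_adj f = (\<lambda>(i,j). f (i, j + 1))"

definition submodule :: "h2 set \<Rightarrow> bool" where
  "submodule M \<longleftrightarrow> M \<subseteq> H2 \<and> (\<lambda>_. 0) \<in> M
     \<and> (\<forall>f\<in>M. \<forall>g\<in>M. (\<lambda>k. f k + g k) \<in> M)
     \<and> (\<forall>c. \<forall>f\<in>M. (\<lambda>k. c * f k) \<in> M)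
     \<and> (\<forall>fs f. (\<forall>n. fs n \<in> M) \<and> f \<in> H2 \<and> (\<lambda>n. norm2 (\<lambda>k. fs n k - f k)) \<longlonglongrightarrow> 0 \<longrightarrow> f \<in> M)
     \<and> mult_z ` M \<subseteq> M \<and> mult_w ` M \<subseteq> M"

definition gen_submodule :: "h2 \<Rightarrow> h2 set" where
  "gen_submodule q = \<Inter>{M. submodule M \<and> q \<in> M}"

definition proj :: "h2 set \<Rightarrow> h2 \<Rightarrow> h2" where
  "proj M f = (THE g. g \<in> M \<and> (\<forall>h\<in>M. inner2 (\<lambda>k. f k - g k) h = 0))"

text \<open>Core operator C = P_M - S_z P_M S_z^* - S_w P_M S_w^* + S_z S_w P_M S_z^* S_w^*
  on H^2; this equals I - R1R1^* - R2R2^* + R1R2R1^*R2^* on M and 0 on M^perp.\<close>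
definition core_op :: "h2 set \<Rightarrow> h2 \<Rightarrow> h2" where
  "core_op M f = (\<lambda>k. proj M f k
      - mult_z (proj M (mult_z_adj f)) k
      - mult_w (proj M (mult_w_adj f)) k
      + mult_z (mult_w (proj M (mult_z_adj (mult_w_adj f)))) k)"

definition basis2 :: "nat \<times> nat \<Rightarrow> h2" where
  "basis2 a = (\<lambda>k. if k = a then 1 else 0)"

definition hilbert_schmidt :: "(h2 \<Rightarrow> h2) \<Rightarrow> bool" where
  "hilbert_schmidt T \<longleftrightarrow> (\<lambda>a. (norm2 (T (basis2 a)))\<^sup>2) summable_on UNIV"

definition hs_norm_sq :: "(h2 \<Rightarrow> h2) \<Rightarrow> real" where
  "hs_norm_sq T = (\<Sum>\<^sub>\<infinity>a. (norm2 (T (basis2 a)))\<^sup>2)"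

definition trace2 :: "(h2 \<Rightarrow> h2) \<Rightarrow> complex" where
  "trace2 T = (\<Sum>\<^sub>\<infinity>a. inner2 (T (basis2 a)) (basis2 a))"

text \<open>(z - w)^2 = z^2 - 2zw + w^2.\<close>
definition zw_sq :: h2 where
  "zw_sq = (\<lambda>k. if k = (2,0) \<or> k = (0,2) then 1 else if k = (1,1) then -2 else 0)"

end

theory Submission
  imports Defs
begin
definition single_deg :: "nat \<Rightarrow> h2 \<Rightarrow> bool" where
  "single_deg n f \<longleftrightarrow> (\<forall>i j. i + j \<noteq> n \<longrightarrow> f (i,j) = 0)"

definition Mset :: "h2 set" where
  "Mset = {f \<in> H2. \<forall>n. (\<Sum>k\<le>n. f (k, n-k)) = 0 \<and> (\<Sum>k\<le>n. of_nat k * f (k, n-k)) = 0}"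

lemma fin_H2:
  assumes "finite {k. f k \<noteq> 0}" shows "f \<in> H2"
  unfolding H2_def mem_Collect_eq
  by (rule finite_nonzero_values_imp_summable_on) (rule finite_subset[OF _ assms], auto)

lemma single_deg_support: "single_deg n f \<Longrightarrow> {k. f k \<noteq> 0} \<subseteq> (\<lambda>i. (i, n-i)) ` {..n}"
proof
  fix x assume "x \<in> {k. f k \<noteq> 0}" "single_deg n f"
  then obtain a b where x: "x = (a,b)" "f (a,b) \<noteq> 0" by (cases x) auto
  hence "a + b = n" using \<open>single_deg n f\<close> unfolding single_deg_def by blast
  thus "x \<in> (\<lambda>i. (i, n-i)) ` {..n}" using x by (auto simp: image_iff)
qed

lemma single_deg_H2: "single_deg n f \<Longrightarrow> f \<in> H2"
  by (rule fin_H2, rule finite_subset[OF single_deg_support]) auto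

lemma sq_ineq1: "((a::real) + b)\<^sup>2 \<le> 2 * a\<^sup>2 + 2 * b\<^sup>2"
proof -
  have "0 \<le> (a - b)\<^sup>2" by simp
  thus ?thesis by (simp add: power2_eq_square algebra_simps)
qed

lemma sq_ineq2: "(a::real) \<ge> 0 \<Longrightarrow> b \<ge> 0 \<Longrightarrow> a * b \<le> a\<^sup>2 + b\<^sup>2"
proof -
  assume "a \<ge> 0" "b \<ge> 0"
  hence "0 \<le> a * b" by simp
  have "0 \<le> (a - b)\<^sup>2" "0 \<le> a\<^sup>2" "0 \<le> b\<^sup>2" by simp_all
  with \<open>0 \<le> a * b\<close> show ?thesis by (simp add: power2_eq_square algebra_simps)
qed

lemma H2_add: assumes "f \<in> H2" "g \<in> H2" shows "(\<lambda>k. f k + g k) \<in> H2"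
proof -
  have "(\<lambda>k. 2 * (cmod (f k))\<^sup>2 + 2 * (cmod (g k))\<^sup>2) summable_on UNIV"
    using assms unfolding H2_def
    by (intro summable_on_add summable_on_cmult_right) auto
  moreover have "(cmod (f k + g k))\<^sup>2 \<le> 2 * (cmod (f k))\<^sup>2 + 2 * (cmod (g k))\<^sup>2" for k
  proof -
    have "cmod (f k + g k) \<le> cmod (f k) + cmod (g k)" by (rule norm_triangle_ineq)
    hence "(cmod (f k + g k))\<^sup>2 \<le> (cmod (f k) + cmod (g k))\<^sup>2"
      by (simp add: power_mono)
    also have "\<dots> \<le> 2 * (cmod (f k))\<^sup>2 + 2 * (cmod (g k))\<^sup>2"
      by (rule sq_ineq1)
    finally show ?thesis .
  qed
  ultimately show ?thesis unfolding H2_def mem_Collect_eq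
    by (rule summable_on_comparison_test) auto
qed

lemma H2_scale: assumes "f \<in> H2" shows "(\<lambda>k. c * f k) \<in> H2"
proof -
  have "(\<lambda>k. (cmod c)\<^sup>2 * (cmod (f k))\<^sup>2) summable_on UNIV"
    using assms unfolding H2_def by (intro summable_on_cmult_right) auto
  thus ?thesis unfolding H2_def by (simp add: norm_mult power_mult_distrib)
qed

lemma H2_diff: assumes "f \<in> H2" "g \<in> H2" shows "(\<lambda>k. f k - g k) \<in> H2"
  using H2_add[OF assms(1) H2_scale[OF assms(2), of "-1"]] by simp

lemma H2_zero: "(\<lambda>_. 0) \<in> H2"
  by (rule fin_H2) simp

lemma H2_inner_summable: assumes "f \<in> H2" "g \<in> H2"
  shows "(\<lambda>k. f k * cnj (g k)) summable_on UNIV"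
proof -
  have "(\<lambda>k. (cmod (f k))\<^sup>2 + (cmod (g k))\<^sup>2) summable_on UNIV"
    using assms unfolding H2_def by (intro summable_on_add) auto
  hence "(\<lambda>k. norm (f k * cnj (g k))) summable_on UNIV"
  proof (rule summable_on_comparison_test)
    fix k
    show "norm (f k * cnj (g k)) \<le> (cmod (f k))\<^sup>2 + (cmod (g k))\<^sup>2"
      by (simp add: norm_mult sq_ineq2)
  qed auto
  thus ?thesis by (rule abs_summable_summable)
qed

lemma H2_coord_le: assumes "g \<in> H2" shows "(cmod (g b))\<^sup>2 \<le> (norm2 g)\<^sup>2"
proof -
  have "infsum (\<lambda>k. (cmod (g k))\<^sup>2) {b} \<le> infsum (\<lambda>k. (cmod (g k))\<^sup>2) UNIV"
    using assms unfolding H2_def by (intro infsum_mono_neutral) auto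
  moreover have "infsum (\<lambda>k. (cmod (g k))\<^sup>2) UNIV \<ge> 0" by (rule infsum_nonneg) simp
  ultimately show ?thesis unfolding norm2_def by simp
qed

lemma H2_coord_le': assumes "g \<in> H2" shows "cmod (g b) \<le> norm2 g"
proof -
  have "norm2 g \<ge> 0" unfolding norm2_def by (simp add: infsum_nonneg)
  thus ?thesis using H2_coord_le[OF assms, of b] by (metis abs_of_nonneg norm_ge_zero real_le_rsqrt real_sqrt_abs power2_eq_square real_sqrt_le_iff)
qed

lemma norm2_sq: "(norm2 d)\<^sup>2 = (\<Sum>\<^sub>\<infinity>k. (cmod (d k))\<^sup>2)"
  unfolding norm2_def by (simp add: infsum_nonneg)

lemma inner2_self: assumes "d \<in> H2" shows "inner2 d d = of_real ((norm2 d)\<^sup>2)"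
proof -
  have "((\<lambda>k. (cmod (d k))\<^sup>2) has_sum (\<Sum>\<^sub>\<infinity>k. (cmod (d k))\<^sup>2)) UNIV"
    using assms unfolding H2_def by auto
  hence "((\<lambda>k. complex_of_real ((cmod (d k))\<^sup>2)) has_sum complex_of_real (\<Sum>\<^sub>\<infinity>k. (cmod (d k))\<^sup>2)) UNIV"
    by (subst has_sum_of_real_iff)
  hence "((\<lambda>k. d k * cnj (d k)) has_sum complex_of_real (\<Sum>\<^sub>\<infinity>k. (cmod (d k))\<^sup>2)) UNIV"
    unfolding complex_norm_square .
  thus ?thesis unfolding inner2_def norm2_sq by (rule infsumI)
qed

lemma inner2_diff: assumes "f \<in> H2" "g \<in> H2" "h \<in> H2"
  shows "inner2 (\<lambda>k. f k - g k) h = inner2 f h - inner2 g h"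
proof -
  have s1: "(\<lambda>k. f k * cnj (h k)) summable_on UNIV" by (rule H2_inner_summable[OF assms(1,3)])
  have s2: "(\<lambda>k. - (g k * cnj (h k))) summable_on UNIV"
    by (subst summable_on_uminus, rule H2_inner_summable[OF assms(2,3)])
  have "inner2 (\<lambda>k. f k - g k) h = (\<Sum>\<^sub>\<infinity>k. f k * cnj (h k) + - (g k * cnj (h k)))"
    unfolding inner2_def by (simp add: algebra_simps)
  also have "\<dots> = inner2 f h + (\<Sum>\<^sub>\<infinity>k. - (g k * cnj (h k)))"
    unfolding inner2_def by (rule infsum_add[OF s1 s2])
  also have "(\<Sum>\<^sub>\<infinity>k. - (g k * cnj (h k))) = - inner2 g h"
    unfolding inner2_def by (rule infsum_uminus)
  finally show ?thesis by simp
qed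

lemma H2_zero_norm: assumes "d \<in> H2" "norm2 d = 0" shows "d = (\<lambda>_. 0)"
proof
  fix b show "d b = 0" using H2_coord_le'[OF assms(1), of b] assms(2) by simp
qed

lemma proj_eqI:
  assumes sub: "\<And>a b. a \<in> M \<Longrightarrow> b \<in> M \<Longrightarrow> (\<lambda>k. a k - b k) \<in> M"
    and MH: "M \<subseteq> H2" and f: "f \<in> H2" and g: "g \<in> M"
    and orth: "\<And>h. h \<in> M \<Longrightarrow> inner2 (\<lambda>k. f k - g k) h = 0"
  shows "proj M f = g"
  unfolding proj_def
proof (rule the_equality)
  show "g \<in> M \<and> (\<forall>h\<in>M. inner2 (\<lambda>k. f k - g k) h = 0)" using g orth by blast
next
  fix g' assume g': "g' \<in> M \<and> (\<forall>h\<in>M. inner2 (\<lambda>k. f k - g' k) h = 0)"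
  define d where "d = (\<lambda>k. g k - g' k)"
  have dM: "d \<in> M" unfolding d_def using sub g g' by blast
  have gH: "g \<in> H2" "g' \<in> H2" "d \<in> H2" using g g' dM MH by auto
  have "inner2 (\<lambda>k. (f k - g' k) - (f k - g k)) d
      = inner2 (\<lambda>k. f k - g' k) d - inner2 (\<lambda>k. f k - g k) d"
    by (rule inner2_diff) (use f gH H2_diff in auto)
  also have "\<dots> = 0" using g' orth dM by simp
  finally have "inner2 d d = 0" unfolding d_def by simp
  hence "norm2 d = 0" using inner2_self[OF gH(3)] by simp
  hence "d = (\<lambda>_. 0)" using H2_zero_norm gH(3) by blast
  hence "\<And>k. g k - g' k = 0" unfolding d_def by (metis fun_cong)
  thus "g' = g" by (intro ext) simp
qed

lemma single_deg_sum_eq: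
  fixes F :: "nat \<times> nat \<Rightarrow> 'a::{comm_monoid_add,t2_space}"
  assumes "\<And>i j. i + j \<noteq> n \<Longrightarrow> F (i,j) = 0"
  shows "infsum F UNIV = (\<Sum>i\<le>n. F (i, n-i))"
proof -
  have "infsum F UNIV = infsum F ((\<lambda>i. (i, n-i)) ` {..n})"
  proof (rule infsum_cong_neutral)
    fix x assume "x \<in> UNIV - (\<lambda>i. (i, n-i)) ` {..n}"
    then obtain a b where "x = (a,b)" "(a,b) \<notin> (\<lambda>i. (i, n-i)) ` {..n}" by (cases x) auto
    hence "a + b \<noteq> n" by (auto simp: image_iff)
    thus "F x = 0" using assms \<open>x = (a,b)\<close> by simp
  qed auto
  also have "\<dots> = sum F ((\<lambda>i. (i, n-i)) ` {..n})" by simp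
  also have "\<dots> = (\<Sum>i\<le>n. F (i, n-i))"
    by (subst sum.reindex) (simp_all add: inj_on_def)
  finally show ?thesis .
qed

lemma inner2_single_deg: assumes "single_deg n f"
  shows "inner2 f h = (\<Sum>i\<le>n. f (i, n-i) * cnj (h (i, n-i)))"
proof -
  have z: "\<And>i j. i + j \<noteq> n \<Longrightarrow> f (i,j) * cnj (h (i,j)) = 0"
    using assms unfolding single_deg_def by simp
  show ?thesis unfolding inner2_def
    using single_deg_sum_eq[where F="\<lambda>k. f k * cnj (h k)" and n=n, OF z] by simp
qed

lemma norm2_single_deg_sq: assumes "single_deg n f"
  shows "(norm2 f)\<^sup>2 = (\<Sum>i\<le>n. (cmod (f (i, n-i)))\<^sup>2)"
proof -
  have z: "\<And>i j. i + j \<noteq> n \<Longrightarrow> (cmod (f (i,j)))\<^sup>2 = 0"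
    using assms unfolding single_deg_def by simp
  show ?thesis unfolding norm2_sq
    using single_deg_sum_eq[where F="\<lambda>k. (cmod (f k))\<^sup>2" and n=n, OF z] by simp
qed

lemma Mset_H2: "f \<in> Mset \<Longrightarrow> f \<in> H2" unfolding Mset_def by simp

lemma Mset_add: "f \<in> Mset \<Longrightarrow> g \<in> Mset \<Longrightarrow> (\<lambda>k. f k + g k) \<in> Mset"
  unfolding Mset_def by (auto simp: H2_add sum.distrib algebra_simps)

lemma Mset_scale: "f \<in> Mset \<Longrightarrow> (\<lambda>k. c * f k) \<in> Mset"
proof -
  assume f: "f \<in> Mset"
  have "(\<Sum>k\<le>n. of_nat k * (c * f (k, n-k))) = c * (\<Sum>k\<le>n. of_nat k * f (k, n-k))" for n
    by (simp add: sum_distrib_left algebra_simps)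
  thus ?thesis using f unfolding Mset_def by (auto simp: H2_scale sum_distrib_left[symmetric])
qed

lemma Mset_diff: "f \<in> Mset \<Longrightarrow> g \<in> Mset \<Longrightarrow> (\<lambda>k. f k - g k) \<in> Mset"
  using Mset_add[of f "\<lambda>k. (-1) * g k"] Mset_scale[of g "-1"] by simp

lemma Mset_zero: "(\<lambda>_. 0) \<in> Mset"
  unfolding Mset_def by (simp add: H2_zero)

lemma Mset_closed:
  assumes fs: "\<And>n. fs n \<in> Mset" and f: "f \<in> H2"
    and lim: "(\<lambda>n. norm2 (\<lambda>k. fs n k - f k)) \<longlonglongrightarrow> 0"
  shows "f \<in> Mset"
proof -
  have coord: "(\<lambda>m. fs m b) \<longlonglongrightarrow> f b" for b
  proof -
    have "(\<lambda>m. fs m b - f b) \<longlonglongrightarrow> 0"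
    proof (rule Lim_null_comparison[OF _ lim])
      show "\<forall>\<^sub>F m in sequentially. norm (fs m b - f b) \<le> norm2 (\<lambda>k. fs m k - f k)"
        using H2_coord_le'[OF H2_diff[OF Mset_H2[OF fs] f]] by simp
    qed
    thus ?thesis by (simp add: LIM_zero_iff)
  qed
  have "(\<Sum>k\<le>n. f (k, n-k)) = 0 \<and> (\<Sum>k\<le>n. of_nat k * f (k, n-k)) = 0" for n
  proof
    have "(\<lambda>m. \<Sum>k\<le>n. fs m (k, n-k)) \<longlonglongrightarrow> (\<Sum>k\<le>n. f (k, n-k))"
      by (intro tendsto_sum coord)
    moreover have "(\<lambda>m. \<Sum>k\<le>n. fs m (k, n-k)) = (\<lambda>m. 0)"
      using fs unfolding Mset_def by auto
    ultimately show "(\<Sum>k\<le>n. f (k, n-k)) = 0" using LIMSEQ_unique tendsto_const by metis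
  next
    have "(\<lambda>m. \<Sum>k\<le>n. of_nat k * fs m (k, n-k)) \<longlonglongrightarrow> (\<Sum>k\<le>n. of_nat k * f (k, n-k))"
      by (intro tendsto_sum tendsto_mult tendsto_const coord)
    moreover have "(\<lambda>m. \<Sum>k\<le>n. of_nat k * fs m (k, n-k)) = (\<lambda>m. 0)"
      using fs unfolding Mset_def by auto
    ultimately show "(\<Sum>k\<le>n. of_nat k * f (k, n-k)) = 0" using LIMSEQ_unique tendsto_const by metis
  qed
  thus ?thesis using f unfolding Mset_def by auto
qed

lemma shift_z_summable:
  fixes g :: "nat \<times> nat \<Rightarrow> real"
  assumes "g summable_on UNIV"
  shows "(\<lambda>(i,j). if i = 0 then 0 else g (i-1,j)) summable_on UNIV"
proof -
  let ?h = "\<lambda>(i::nat,j::nat). (i+1,j)"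
  let ?G = "\<lambda>(i,j). if i = 0 then 0 else g (i-1,j)"
  have "(?G \<circ> ?h) = g" by (auto simp: fun_eq_iff)
  hence "?G summable_on (?h ` UNIV)"
    using assms by (subst summable_on_reindex) (auto simp: inj_on_def)
  moreover have "?G summable_on (?h ` UNIV) \<longleftrightarrow> ?G summable_on UNIV"
  proof (rule summable_on_cong_neutral)
    fix x assume "x \<in> UNIV - ?h ` UNIV"
    then obtain i j where "x = (i,j)" "(i,j) \<notin> ?h ` UNIV" by (cases x) auto
    hence "i = 0" by (cases i) (auto simp: image_iff)
    thus "?G x = 0" using \<open>x = (i,j)\<close> by simp
  qed auto
  ultimately show ?thesis by simp
qed

lemma shift_w_summable:
  fixes g :: "nat \<times> nat \<Rightarrow> real"
  assumes "g summable_on UNIV"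
  shows "(\<lambda>(i,j). if j = 0 then 0 else g (i,j-1)) summable_on UNIV"
proof -
  let ?h = "\<lambda>(i::nat,j::nat). (i,j+1)"
  let ?G = "\<lambda>(i,j). if j = 0 then 0 else g (i,j-1)"
  have "(?G \<circ> ?h) = g" by (auto simp: fun_eq_iff)
  hence "?G summable_on (?h ` UNIV)"
    using assms by (subst summable_on_reindex) (auto simp: inj_on_def)
  moreover have "?G summable_on (?h ` UNIV) \<longleftrightarrow> ?G summable_on UNIV"
  proof (rule summable_on_cong_neutral)
    fix x assume "x \<in> UNIV - ?h ` UNIV"
    then obtain i j where "x = (i,j)" "(i,j) \<notin> ?h ` UNIV" by (cases x) auto
    hence "j = 0" by (cases j) (auto simp: image_iff)
    thus "?G x = 0" using \<open>x = (i,j)\<close> by simp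
  qed auto
  ultimately show ?thesis by simp
qed

lemma mult_z_H2: assumes "f \<in> H2" shows "mult_z f \<in> H2"
proof -
  have "(\<lambda>(i,j). if i = 0 then 0 else (\<lambda>k. (cmod (f k))\<^sup>2) (i-1,j)) summable_on UNIV"
    using assms unfolding H2_def by (intro shift_z_summable) auto
  moreover have "(\<lambda>k. (cmod (mult_z f k))\<^sup>2) = (\<lambda>(i,j). if i = 0 then 0 else (\<lambda>k. (cmod (f k))\<^sup>2) (i-1,j))"
    by (auto simp: mult_z_def fun_eq_iff)
  ultimately show ?thesis unfolding H2_def by simp
qed

lemma mult_w_H2: assumes "f \<in> H2" shows "mult_w f \<in> H2"
proof -
  have "(\<lambda>(i,j). if j = 0 then 0 else (\<lambda>k. (cmod (f k))\<^sup>2) (i,j-1)) summable_on UNIV"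
    using assms unfolding H2_def by (intro shift_w_summable) auto
  moreover have "(\<lambda>k. (cmod (mult_w f k))\<^sup>2) = (\<lambda>(i,j). if j = 0 then 0 else (\<lambda>k. (cmod (f k))\<^sup>2) (i,j-1))"
    by (auto simp: mult_w_def fun_eq_iff)
  ultimately show ?thesis unfolding H2_def by simp
qed

lemma mult_z_Mset: assumes f: "f \<in> Mset" shows "mult_z f \<in> Mset"
proof -
  have c: "(\<Sum>k\<le>n. mult_z f (k, n-k)) = 0 \<and> (\<Sum>k\<le>n. of_nat k * mult_z f (k, n-k)) = 0" for n
  proof (cases n)
    case 0 thus ?thesis by (simp add: mult_z_def)
  next
    case (Suc m)
    have s0: "(\<Sum>k\<le>m. f (k, m-k)) = 0" "(\<Sum>k\<le>m. of_nat k * f (k, m-k)) = 0"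
      using f unfolding Mset_def by auto
    have "(\<Sum>k\<le>n. mult_z f (k, n-k)) = (\<Sum>k\<le>m. f (k, m-k))"
      unfolding Suc by (subst sum.atMost_Suc_shift) (simp add: mult_z_def)
    moreover have "(\<Sum>k\<le>n. of_nat k * mult_z f (k, n-k)) = (\<Sum>k\<le>m. of_nat k * f (k, m-k)) + (\<Sum>k\<le>m. f (k, m-k))"
      unfolding Suc by (subst sum.atMost_Suc_shift) (simp add: mult_z_def algebra_simps sum.distrib)
    ultimately show ?thesis using s0 by simp
  qed
  thus ?thesis using mult_z_H2 f unfolding Mset_def by auto
qed

lemma mult_w_Mset: assumes f: "f \<in> Mset" shows "mult_w f \<in> Mset"
proof -
  have c: "(\<Sum>k\<le>n. mult_w f (k, n-k)) = 0 \<and> (\<Sum>k\<le>n. of_nat k * mult_w f (k, n-k)) = 0" for n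
  proof (cases n)
    case 0 thus ?thesis by (simp add: mult_w_def)
  next
    case (Suc m)
    have s0: "(\<Sum>k\<le>m. f (k, m-k)) = 0" "(\<Sum>k\<le>m. of_nat k * f (k, m-k)) = 0"
      using f unfolding Mset_def by auto
    have e: "\<And>k. k \<le> m \<Longrightarrow> mult_w f (k, Suc m - k) = f (k, m-k)"
      by (simp add: mult_w_def Suc_diff_le)
    have "(\<Sum>k\<le>n. mult_w f (k, n-k)) = (\<Sum>k\<le>m. f (k, m-k))"
      unfolding Suc by (simp add: e mult_w_def)
    moreover have "(\<Sum>k\<le>n. of_nat k * mult_w f (k, n-k)) = (\<Sum>k\<le>m. of_nat k * f (k, m-k))"
      unfolding Suc by (simp add: e mult_w_def)
    ultimately show ?thesis using s0 by simp
  qed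
  thus ?thesis using mult_w_H2 f unfolding Mset_def by auto
qed

lemma single_deg_other: "single_deg m f \<Longrightarrow> n \<noteq> m \<Longrightarrow> k \<le> n \<Longrightarrow> f (k, n-k) = 0"
  unfolding single_deg_def by simp

lemma zw_sq_single: "single_deg 2 zw_sq"
  unfolding single_deg_def zw_sq_def by auto

lemma zw_sq_Mset: "zw_sq \<in> Mset"
proof -
  have "(\<Sum>k\<le>n. zw_sq (k, n-k)) = 0 \<and> (\<Sum>k\<le>n. of_nat k * zw_sq (k, n-k)) = 0" for n
  proof (cases "n = 2")
    case True
    thus ?thesis by (simp add: numeral_2_eq_2 zw_sq_def atMost_Suc)
  next
    case False
    thus ?thesis using single_deg_other[OF zw_sq_single False] by simp
  qed
  thus ?thesis unfolding Mset_def using single_deg_H2[OF zw_sq_single] by auto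
qed

lemma submodule_Mset: "submodule Mset"
  unfolding submodule_def
proof (intro conjI allI ballI impI subsetI)
  show "\<And>x. x \<in> Mset \<Longrightarrow> x \<in> H2" by (rule Mset_H2)
  show "(\<lambda>_. 0) \<in> Mset" by (rule Mset_zero)
  show "\<And>f g. f \<in> Mset \<Longrightarrow> g \<in> Mset \<Longrightarrow> (\<lambda>k. f k + g k) \<in> Mset" by (rule Mset_add)
  show "\<And>c f. f \<in> Mset \<Longrightarrow> (\<lambda>k. c * f k) \<in> Mset" by (rule Mset_scale)
  show "\<And>fs f. (\<forall>n. fs n \<in> Mset) \<and> f \<in> H2 \<and> (\<lambda>n. norm2 (\<lambda>k. fs n k - f k)) \<longlonglongrightarrow> 0 \<Longrightarrow> f \<in> Mset"
    using Mset_closed by blast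
  show "\<And>x. x \<in> mult_z ` Mset \<Longrightarrow> x \<in> Mset" using mult_z_Mset by blast
  show "\<And>x. x \<in> mult_w ` Mset \<Longrightarrow> x \<in> Mset" using mult_w_Mset by blast
qed

lemma gen_sub_Mset: "gen_submodule zw_sq \<subseteq> Mset"
  unfolding gen_submodule_def using submodule_Mset zw_sq_Mset by blast

lemma deg_bij: "bij_betw (\<lambda>(n,k). (k, n-k)) (SIGMA n:UNIV. {..n}) (UNIV :: (nat\<times>nat) set)"
proof (rule bij_betwI[where g="\<lambda>(i::nat,j::nat). (i+j, i)"])
  show "(\<lambda>(n,k). (k, n-k)) \<in> (SIGMA n:UNIV. {..n}) \<rightarrow> UNIV" by auto
  show "(\<lambda>(i::nat,j::nat). (i+j, i)) \<in> UNIV \<rightarrow> (SIGMA n:UNIV. {..n})" by auto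
  show "\<And>x. x \<in> (SIGMA n:UNIV. {..n}) \<Longrightarrow> (\<lambda>(i::nat,j::nat). (i+j, i)) ((\<lambda>(n,k). (k, n-k)) x) = x" by auto
  show "\<And>y. y \<in> UNIV \<Longrightarrow> (\<lambda>(n,k). (k, n-k)) ((\<lambda>(i::nat,j::nat). (i+j, i)) y) = y" by auto
qed

lemma deg_has_sum:
  fixes g :: "nat \<times> nat \<Rightarrow> real"
  assumes "(g has_sum S) UNIV"
  shows "(\<lambda>n. \<Sum>k\<le>n. g (k, n-k)) sums S"
proof -
  have "((\<lambda>x. g ((\<lambda>(n,k). (k, n-k)) x)) has_sum S) (SIGMA n:UNIV. {..n})"
    using assms by (subst has_sum_reindex_bij_betw[OF deg_bij])
  hence "((\<lambda>(n,k). g (k, n-k)) has_sum S) (SIGMA n:UNIV. {..n})"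
    by (simp add: case_prod_beta')
  hence "((\<lambda>n. \<Sum>k\<le>n. g (k, n-k)) has_sum S) UNIV"
    by (rule has_sum_Sigma') (simp add: has_sum_finiteI)
  thus ?thesis by (rule has_sum_imp_sums)
qed

lemma deg_has_sum_conv:
  fixes g :: "nat \<times> nat \<Rightarrow> real"
  assumes nn: "\<And>k. g k \<ge> 0" and s: "(\<lambda>n. \<Sum>k\<le>n. g (k, n-k)) sums S"
  shows "(g has_sum S) UNIV"
proof -
  define b where "b n = (\<Sum>k\<le>n. g (k, n-k))" for n
  have bs: "b sums S" using s unfolding b_def .
  have bsum: "b summable_on UNIV"
    using bs nn unfolding b_def by (subst summable_on_UNIV_nonneg_real_iff) (auto intro: sum_nonneg sums_summable)
  have hb: "(b has_sum (infsum b UNIV)) UNIV" using bsum by (rule has_sum_infsum)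
  have "b sums (infsum b UNIV)" using hb by (rule has_sum_imp_sums)
  hence "infsum b UNIV = S" using bs by (rule sums_unique2)
  hence hs: "(b has_sum S) UNIV" using hb by simp
  have fin: "\<And>n. n \<in> UNIV \<Longrightarrow> ((\<lambda>k. (\<lambda>(n,k). g (k, n-k)) (n, k)) has_sum b n) {..n}"
    unfolding b_def by (simp add: has_sum_finiteI)
  have nn2: "\<And>x y. x \<in> UNIV \<Longrightarrow> y \<in> {..x} \<Longrightarrow> 0 \<le> (\<lambda>(n,k). g (k, n-k)) (x, y)"
    using nn by simp
  have sm: "(\<lambda>(n,k). g (k, n-k)) summable_on (SIGMA n:UNIV. {..n})"
    by (rule summable_on_SigmaI[OF fin bsum nn2])
  have "((\<lambda>(n,k). g (k, n-k)) has_sum S) (SIGMA n:UNIV. {..n})"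
    by (rule has_sum_SigmaI[OF fin hs sm])
  hence "((\<lambda>x. g ((\<lambda>(n,k). (k, n-k)) x)) has_sum S) (SIGMA n:UNIV. {..n})"
    by (simp add: case_prod_beta')
  thus ?thesis by (subst (asm) has_sum_reindex_bij_betw[OF deg_bij])
qed

lemma tail_to_zero:
  fixes f :: h2
  assumes f: "f \<in> H2"
  shows "(\<lambda>m. norm2 (\<lambda>k. (if fst k + snd k < m then f k else 0) - f k)) \<longlonglongrightarrow> 0"
proof -
  define a where "a n = (\<Sum>k\<le>n. (cmod (f (k, n-k)))\<^sup>2)" for n
  define S where "S = (\<Sum>\<^sub>\<infinity>k. (cmod (f k))\<^sup>2)"
  have hsf: "((\<lambda>k. (cmod (f k))\<^sup>2) has_sum S) UNIV"
    using f unfolding H2_def S_def by (simp add: has_sum_infsum)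
  have as: "a sums S" unfolding a_def by (rule deg_has_sum[OF hsf])
  have eq: "(norm2 (\<lambda>k. (if fst k + snd k < m then f k else 0) - f k))
            = sqrt (S - (\<Sum>n<m. a n))" for m
  proof -
    define g where "g k = (if fst k + snd k < m then 0 else (cmod (f k))\<^sup>2)" for k
    have gs: "g summable_on UNIV"
      using f unfolding H2_def mem_Collect_eq
      by (rule summable_on_comparison_test) (auto simp: g_def)
    have "(\<lambda>n. \<Sum>k\<le>n. g (k, n-k)) sums (\<Sum>\<^sub>\<infinity>k. g k)"
      by (rule deg_has_sum) (use gs in \<open>simp add: has_sum_infsum\<close>)
    moreover have "(\<lambda>n. \<Sum>k\<le>n. g (k, n-k)) = (\<lambda>n. a n - (if n \<in> {..<m} then a n else 0))"
      by (auto simp: fun_eq_iff g_def a_def)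
    moreover have "(\<lambda>n. a n - (if n \<in> {..<m} then a n else 0)) sums (S - (\<Sum>n<m. a n))"
      by (intro sums_diff as sums_If_finite_set) simp
    ultimately have "(\<Sum>\<^sub>\<infinity>k. g k) = S - (\<Sum>n<m. a n)" using sums_unique2 by metis
    moreover have "(\<lambda>k. (cmod ((if fst k + snd k < m then f k else 0) - f k))\<^sup>2) = g"
      by (auto simp: fun_eq_iff g_def)
    ultimately show ?thesis unfolding norm2_def by simp
  qed
  have "(\<lambda>m. S - (\<Sum>n<m. a n)) \<longlonglongrightarrow> S - S"
    by (intro tendsto_diff tendsto_const) (metis as sums_def)
  hence "(\<lambda>m. sqrt (S - (\<Sum>n<m. a n))) \<longlonglongrightarrow> sqrt (S - S)"
    by (rule tendsto_real_sqrt)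
  thus ?thesis unfolding eq by simp
qed

lemma submoduleD:
  assumes "submodule N"
  shows "(\<lambda>_. 0) \<in> N"
    and "\<And>f g. f \<in> N \<Longrightarrow> g \<in> N \<Longrightarrow> (\<lambda>k. f k + g k) \<in> N"
    and "\<And>c f. f \<in> N \<Longrightarrow> (\<lambda>k. c * f k) \<in> N"
    and "\<And>f. f \<in> N \<Longrightarrow> mult_z f \<in> N"
    and "\<And>f. f \<in> N \<Longrightarrow> mult_w f \<in> N"
    and "\<And>fs f. (\<And>n. fs n \<in> N) \<Longrightarrow> f \<in> H2 \<Longrightarrow> (\<lambda>n. norm2 (\<lambda>k. fs n k - f k)) \<longlonglongrightarrow> 0 \<Longrightarrow> f \<in> N"
proof -
  note big = assms[unfolded submodule_def]
  note c = big[THEN conjunct2, THEN conjunct1]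
      big[THEN conjunct2, THEN conjunct2, THEN conjunct1]
      big[THEN conjunct2, THEN conjunct2, THEN conjunct2, THEN conjunct1]
      big[THEN conjunct2, THEN conjunct2, THEN conjunct2, THEN conjunct2, THEN conjunct1]
      big[THEN conjunct2, THEN conjunct2, THEN conjunct2, THEN conjunct2, THEN conjunct2, THEN conjunct1]
      big[THEN conjunct2, THEN conjunct2, THEN conjunct2, THEN conjunct2, THEN conjunct2, THEN conjunct2]
  show "(\<lambda>_. 0) \<in> N" by (rule c(1))
  show "\<And>f g. f \<in> N \<Longrightarrow> g \<in> N \<Longrightarrow> (\<lambda>k. f k + g k) \<in> N" using c(2) by blast
  show "\<And>c f. f \<in> N \<Longrightarrow> (\<lambda>k. c * f k) \<in> N" using c(3) by blast
  show "\<And>f. f \<in> N \<Longrightarrow> mult_z f \<in> N" using c(5) by blast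
  show "\<And>f. f \<in> N \<Longrightarrow> mult_w f \<in> N" using c(6) by blast
  show "\<And>fs f. (\<And>n. fs n \<in> N) \<Longrightarrow> f \<in> H2 \<Longrightarrow> (\<lambda>n. norm2 (\<lambda>k. fs n k - f k)) \<longlonglongrightarrow> 0 \<Longrightarrow> f \<in> N"
    using c(4) by blast
qed

lemma sub_sum:
  assumes N: "submodule N" and A: "finite A" and v: "\<And>x. x \<in> A \<Longrightarrow> v x \<in> N"
  shows "(\<lambda>k. \<Sum>x\<in>A. v x k) \<in> N"
  using A v
proof (induction A rule: finite_induct)
  case empty thus ?case using submoduleD(1)[OF N] by simp
next
  case (insert a A)
  have "(\<lambda>k. v a k + (\<Sum>x\<in>A. v x k)) \<in> N"
    using submoduleD(2)[OF N, of "v a" "\<lambda>k. \<Sum>x\<in>A. v x k"] insert by simp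
  thus ?case using insert by simp
qed

lemma sub_lin:
  assumes N: "submodule N" and f: "f \<in> N" and g: "g \<in> N"
  shows "(\<lambda>k. f k + c * g k) \<in> N"
proof -
  have "(\<lambda>k. c * g k) \<in> N" using submoduleD(3)[OF N g] .
  thus ?thesis using submoduleD(2)[OF N f] by blast
qed

lemma mult_w_apply: "mult_w g (i,j) = (if j = 0 then 0 else g (i, j-1))"
  by (simp add: mult_w_def)

lemma mult_z_apply: "mult_z g (i,j) = (if i = 0 then 0 else g (i-1, j))"
  by (simp add: mult_z_def)

lemma mult_w_pow: "(mult_w ^^ m) f (i, j) = (if m \<le> j then f (i, j - m) else 0)"
proof (induction m arbitrary: i j)
  case 0 thus ?case by simp
next
  case (Suc m)
  have "(mult_w ^^ Suc m) f (i,j) = mult_w ((mult_w ^^ m) f) (i,j)" by simp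
  also have "\<dots> = (if j = 0 then 0 else (mult_w ^^ m) f (i, j-1))" by (rule mult_w_apply)
  also have "\<dots> = (if Suc m \<le> j then f (i, j - Suc m) else 0)" using Suc.IH by auto
  finally show ?case .
qed

lemma mult_w_pow_N: assumes N: "submodule N" and f: "f \<in> N" shows "(mult_w ^^ m) f \<in> N"
proof (induction m)
  case 0 thus ?case using f by simp
next
  case (Suc m) thus ?case using submoduleD(5)[OF N] by simp
qed

lemma mult_w_pow_Mset: assumes f: "f \<in> Mset" shows "(mult_w ^^ m) f \<in> Mset"
  by (induction m) (use f mult_w_Mset in auto)

lemma W_single: "single_deg (m+2) ((mult_w ^^ m) zw_sq)"
  unfolding single_deg_def mult_w_pow by (auto simp: zw_sq_def)

lemma W_val: "(mult_w ^^ m) zw_sq (0, m+2) = 1"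
  unfolding mult_w_pow by (simp add: zw_sq_def)

lemma single_deg_zero: assumes "single_deg 0 F" "F \<in> Mset" shows "F = (\<lambda>_. 0)"
proof
  fix x :: "nat \<times> nat"
  obtain i j where x: "x = (i,j)" by (cases x)
  have "F (0,0) = 0" using assms(2) unfolding Mset_def by (auto dest: spec[of _ 0])
  thus "F x = 0" using assms(1) unfolding single_deg_def x by (cases "i + j = 0") auto
qed

lemma single_deg_one: assumes "single_deg 1 F" "F \<in> Mset" shows "F = (\<lambda>_. 0)"
proof
  fix x :: "nat \<times> nat"
  obtain i j where x: "x = (i,j)" by (cases x)
  have "(\<Sum>k\<le>1. F (k, 1-k)) = 0" "(\<Sum>k\<le>1. of_nat k * F (k, 1-k)) = 0"
    using assms(2) unfolding Mset_def by auto
  hence "F (0,1) = 0" "F (1,0) = 0" by simp_all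
  moreover have "i + j = 1 \<Longrightarrow> (i,j) = (0,1) \<or> (i,j) = (1,0)" by auto
  ultimately show "F x = 0" using assms(1) unfolding single_deg_def x by (cases "i + j = 1") auto
qed

lemma single_deg_in_N:
  assumes N: "submodule N" and z: "zw_sq \<in> N"
  shows "single_deg n F \<Longrightarrow> F \<in> Mset \<Longrightarrow> F \<in> N"
proof (induction n arbitrary: F)
  case 0
  hence "F = (\<lambda>_. 0)" by (rule single_deg_zero)
  thus ?case using submoduleD(1)[OF N] by simp
next
  case (Suc m)
  show ?case
  proof (cases m)
    case 0
    hence "F = (\<lambda>_. 0)" using Suc.prems single_deg_one by simp
    thus ?thesis using submoduleD(1)[OF N] by simp
  next
    case (Suc p)
    define W where "W = (mult_w ^^ p) zw_sq"
    define c where "c = F (0, Suc m)"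
    define F' where "F' = (\<lambda>k. F k + (- c) * W k)"
    have mp: "Suc m = p + 2" using Suc by simp
    have WN: "W \<in> N" unfolding W_def by (rule mult_w_pow_N[OF N z])
    have WM: "W \<in> Mset" unfolding W_def by (rule mult_w_pow_Mset[OF zw_sq_Mset])
    have Ws: "single_deg (Suc m) W" unfolding W_def mp by (rule W_single)
    have Wv: "W (0, Suc m) = 1" unfolding W_def mp by (rule W_val)
    have F'M: "F' \<in> Mset" unfolding F'_def using Suc.prems(2) WM Mset_add Mset_scale by blast
    have F's: "single_deg (Suc m) F'" using Suc.prems(1) Ws unfolding F'_def single_deg_def by simp
    have F'0: "F' (0, j) = 0" for j
    proof (cases "j = Suc m")
      case True thus ?thesis unfolding F'_def c_def using Wv by simp
    next
      case False thus ?thesis using F's unfolding single_deg_def by simp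
    qed
    define G where "G = mult_z_adj F'"
    have Gv: "G (i,j) = F' (i+1, j)" for i j unfolding G_def mult_z_adj_def by simp
    have Gs: "single_deg m G" using F's unfolding single_deg_def Gv by simp
    have GM: "G \<in> Mset"
    proof -
      have s1: "(\<Sum>k\<le>Suc m. F' (k, Suc m - k)) = 0" "(\<Sum>k\<le>Suc m. of_nat k * F' (k, Suc m - k)) = 0"
        using F'M unfolding Mset_def by auto
      have "(\<Sum>k\<le>Suc m. F' (k, Suc m - k)) = (\<Sum>k\<le>m. G (k, m-k))"
        by (subst sum.atMost_Suc_shift) (simp add: F'0 Gv)
      moreover have "(\<Sum>k\<le>Suc m. of_nat k * F' (k, Suc m - k)) = (\<Sum>k\<le>m. of_nat k * G (k, m-k)) + (\<Sum>k\<le>m. G (k, m-k))"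
        by (subst sum.atMost_Suc_shift) (simp add: F'0 Gv algebra_simps sum.distrib)
      ultimately have e1: "(\<Sum>k\<le>m. G (k, m-k)) = 0 \<and> (\<Sum>k\<le>m. of_nat k * G (k, m-k)) = 0"
        using s1 by simp_all
      have "(\<Sum>k\<le>n. G (k, n-k)) = 0 \<and> (\<Sum>k\<le>n. of_nat k * G (k, n-k)) = 0" for n
      proof (cases "n = m")
        case True thus ?thesis using e1 by simp
      next
        case False thus ?thesis using single_deg_other[OF Gs False] by simp
      qed
      thus ?thesis unfolding Mset_def using single_deg_H2[OF Gs] by auto
    qed
    have GN: "G \<in> N" by (rule Suc.IH[OF Gs GM])
    have "mult_z G = F'"
    proof
      fix x :: "nat \<times> nat" obtain i j where x: "x = (i,j)" by (cases x)
      show "mult_z G x = F' x" unfolding x mult_z_def using F'0 by (cases i) (simp_all add: Gv)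
    qed
    hence F'N: "F' \<in> N" using submoduleD(4)[OF N GN] by simp
    have "F = (\<lambda>k. F' k + c * W k)" unfolding F'_def by simp
    thus ?thesis using sub_lin[OF N F'N WN] by simp
  qed
qed

lemma Mset_in_N:
  assumes N: "submodule N" and z: "zw_sq \<in> N" and f: "f \<in> Mset"
  shows "f \<in> N"
proof -
  define H where "H n = (\<lambda>(i,j). if i + j = n then f (i,j) else 0)" for n
  have Hs: "single_deg n (H n)" for n unfolding H_def single_deg_def by simp
  have HM: "H n \<in> Mset" for n
  proof -
    have "(\<Sum>k\<le>n'. H n (k, n'-k)) = 0 \<and> (\<Sum>k\<le>n'. of_nat k * H n (k, n'-k)) = 0" for n'
    proof (cases "n' = n")
      case True thus ?thesis using f unfolding Mset_def H_def by simp
    next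
      case False thus ?thesis using single_deg_other[OF Hs False] by simp
    qed
    thus ?thesis unfolding Mset_def using single_deg_H2[OF Hs] by auto
  qed
  have HN: "H n \<in> N" for n by (rule single_deg_in_N[OF N z Hs HM])
  define fs where "fs m = (\<lambda>k. \<Sum>n\<in>{..<m}. H n k)" for m
  have fsN: "fs m \<in> N" for m unfolding fs_def by (rule sub_sum[OF N]) (auto simp: HN)
  have fsv: "fs m = (\<lambda>k. if fst k + snd k < m then f k else 0)" for m
  proof
    fix k :: "nat \<times> nat" obtain i j where k: "k = (i,j)" by (cases k)
    show "fs m k = (if fst k + snd k < m then f k else 0)"
      unfolding fs_def H_def k by (simp add: sum.delta')
  qed
  have lim: "(\<lambda>m. norm2 (\<lambda>k. fs m k - f k)) \<longlonglongrightarrow> 0"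
    unfolding fsv using tail_to_zero[OF Mset_H2[OF f]] by simp
  show ?thesis by (rule submoduleD(6)[OF N fsN Mset_H2[OF f] lim])
qed

lemma gen_eq: "gen_submodule zw_sq = Mset"
proof
  show "gen_submodule zw_sq \<subseteq> Mset" by (rule gen_sub_Mset)
  show "Mset \<subseteq> gen_submodule zw_sq"
    unfolding gen_submodule_def using Mset_in_N by blast
qed

definition bet :: "nat \<Rightarrow> nat \<Rightarrow> real" where
  "bet n k = 12 * (real k - real n / 2) / (real n * (real n + 1) * (real n + 2))"

definition P :: "nat \<Rightarrow> nat \<Rightarrow> nat \<Rightarrow> real" where
  "P n i k = 1 / (real n + 1) + bet n k * (real i - real n / 2)"

lemma sum_id1: "(\<Sum>i\<le>n. real i) = real n * (real n + 1) / 2"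
  by (induction n) (simp_all add: field_simps)

lemma sum_id2: "(\<Sum>i\<le>n. (real i)\<^sup>2) = real n * (real n + 1) * (2 * real n + 1) / 6"
  by (induction n) (simp_all add: field_simps power2_eq_square)

lemma P_sum1: "(\<Sum>i\<le>n. P n i k) = 1"
proof -
  have "(\<Sum>i\<le>n. P n i k) = (real n + 1) / (real n + 1) + bet n k * ((\<Sum>i\<le>n. real i) - (real n + 1) * (real n / 2))"
    unfolding P_def by (simp add: sum.distrib sum_distrib_left sum_subtractf algebra_simps)
  also have "\<dots> = 1" unfolding sum_id1 by (simp add: field_simps)
  finally show ?thesis .
qed

lemma P_sumi: assumes "k \<le> n" shows "(\<Sum>i\<le>n. real i * P n i k) = real k"
proof (cases "n = 0")
  case True thus ?thesis using assms by simp
next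
  case False
  hence n: "real n > 0" by simp
  have "(\<Sum>i\<le>n. real i * P n i k) = (\<Sum>i\<le>n. real i) / (real n + 1) + bet n k * ((\<Sum>i\<le>n. (real i)\<^sup>2) - (real n / 2) * (\<Sum>i\<le>n. real i))"
    unfolding P_def by (simp add: sum.distrib sum_distrib_left sum_subtractf algebra_simps power2_eq_square sum_divide_distrib)
  also have "\<dots> = real n / 2 + bet n k * (real n * (real n + 1) * (real n + 2) / 12)"
  proof -
    have a: "real n * (real n + 1) * (2 * real n + 1) / 6 - real n / 2 * (real n * (real n + 1) / 2)
           = real n * (real n + 1) * (real n + 2) / 12" by (simp add: field_simps)
    have c: "real n * (real n + 1) / 2 / (real n + 1) = real n / 2" by (simp add: field_simps)
    show ?thesis unfolding sum_id1 sum_id2 a c ..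
  qed
  also have "bet n k * (real n * (real n + 1) * (real n + 2) / 12) = real k - real n / 2"
  proof -
    have nz: "real n * (real n + 1) * (real n + 2) \<noteq> 0" using n by simp
    have "bet n k * (real n * (real n + 1) * (real n + 2) / 12)
      = 12 * (real k - real n / 2) / (real n * (real n + 1) * (real n + 2)) * (real n * (real n + 1) * (real n + 2) / 12)"
      unfolding bet_def ..
    also have "\<dots> = real k - real n / 2" using nz by simp
    finally show ?thesis .
  qed
  finally show ?thesis by simp
qed

definition piop :: "nat \<Rightarrow> h2 \<Rightarrow> h2" where
  "piop n f = (\<lambda>(a,b). if a + b = n then (\<Sum>k\<le>n. of_real (P n a k) * f (k, n-k)) else 0)"

lemma piop_single: "single_deg n (piop n f)"
  unfolding single_deg_def piop_def by simp

lemma cnj_zero_sums: assumes "h \<in> Mset"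
  shows "(\<Sum>i\<le>n. cnj (h (i, n-i))) = 0" "(\<Sum>i\<le>n. of_nat i * cnj (h (i, n-i))) = 0"
proof -
  have "(\<Sum>i\<le>n. h (i, n-i)) = 0" "(\<Sum>i\<le>n. of_nat i * h (i, n-i)) = 0"
    using assms unfolding Mset_def by auto
  hence "cnj (\<Sum>i\<le>n. h (i, n-i)) = 0" "cnj (\<Sum>i\<le>n. of_nat i * h (i, n-i)) = 0" by simp_all
  thus "(\<Sum>i\<le>n. cnj (h (i, n-i))) = 0" "(\<Sum>i\<le>n. of_nat i * cnj (h (i, n-i))) = 0"
    by (simp_all add: cnj_sum)
qed

lemma proj_single:
  assumes f: "single_deg n f"
  shows "proj Mset f = (\<lambda>x. f x - piop n f x)"
proof (rule proj_eqI)
  show "\<And>a b. a \<in> Mset \<Longrightarrow> b \<in> Mset \<Longrightarrow> (\<lambda>k. a k - b k) \<in> Mset" by (rule Mset_diff)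
  show "Mset \<subseteq> H2" using Mset_H2 by blast
  show "f \<in> H2" by (rule single_deg_H2[OF f])
  have gs: "single_deg n (\<lambda>x. f x - piop n f x)"
    using f piop_single[of n f] unfolding single_deg_def by simp
  have "(\<Sum>k\<le>m. f (k, m-k) - piop n f (k, m-k)) = 0 \<and> (\<Sum>k\<le>m. of_nat k * (f (k, m-k) - piop n f (k, m-k))) = 0" for m
  proof (cases "m = n")
    case False thus ?thesis using single_deg_other[OF gs False] by simp
  next
    case True
    have pv: "piop n f (i, n-i) = (\<Sum>k\<le>n. of_real (P n i k) * f (k, n-k))" if "i \<le> n" for i
      using that unfolding piop_def by simp
    have "(\<Sum>i\<le>n. piop n f (i, n-i)) = (\<Sum>k\<le>n. (\<Sum>i\<le>n. of_real (P n i k)) * f (k, n-k))"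
      by (simp add: pv sum_distrib_right) (rule sum.swap)
    also have "\<dots> = (\<Sum>k\<le>n. f (k, n-k))"
      by (simp add: P_sum1 flip: of_real_sum)
    finally have e1: "(\<Sum>i\<le>n. piop n f (i, n-i)) = (\<Sum>k\<le>n. f (k, n-k))" .
    have "(\<Sum>i\<le>n. of_nat i * piop n f (i, n-i)) = (\<Sum>k\<le>n. (\<Sum>i\<le>n. of_real (real i * P n i k)) * f (k, n-k))"
      by (simp add: pv sum_distrib_right sum_distrib_left mult.assoc) (rule sum.swap)
    also have "\<dots> = (\<Sum>k\<le>n. of_nat k * f (k, n-k))"
    proof (rule sum.cong[OF refl])
      fix k assume "k \<in> {..n}"
      hence kn: "k \<le> n" by simp
      have "(\<Sum>i\<le>n. (of_real (real i * P n i k) :: complex)) = of_real (\<Sum>i\<le>n. real i * P n i k)"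
        by (rule of_real_sum[symmetric])
      also have "\<dots> = of_nat k" by (simp add: P_sumi[OF kn])
      finally show "(\<Sum>i\<le>n. (of_real (real i * P n i k) :: complex)) * f (k, n-k) = of_nat k * f (k, n-k)" by simp
    qed
    finally have e2: "(\<Sum>i\<le>n. of_nat i * piop n f (i, n-i)) = (\<Sum>k\<le>n. of_nat k * f (k, n-k))" .
    show ?thesis using True e1 e2 by (simp add: sum_subtractf right_diff_distrib)
  qed
  thus "(\<lambda>x. f x - piop n f x) \<in> Mset"
    unfolding Mset_def using single_deg_H2[OF gs] by auto
  fix h assume h: "h \<in> Mset"
  have "inner2 (\<lambda>k. f k - (f k - piop n f k)) h = inner2 (piop n f) h" by simp
  also have "\<dots> = (\<Sum>i\<le>n. piop n f (i, n-i) * cnj (h (i, n-i)))"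
    by (rule inner2_single_deg[OF piop_single])
  also have "\<dots> = (\<Sum>k\<le>n. f (k, n-k) * (\<Sum>i\<le>n. of_real (P n i k) * cnj (h (i, n-i))))"
    unfolding piop_def by (simp add: sum_distrib_right sum_distrib_left mult_ac) (rule sum.swap)
  also have "\<dots> = 0"
  proof (rule sum.neutral, rule ballI)
    fix k
    have "(\<Sum>i\<le>n. of_real (P n i k) * cnj (h (i, n-i)))
        = of_real (1 / (real n + 1) - bet n k * (real n / 2)) * (\<Sum>i\<le>n. cnj (h (i, n-i)))
          + of_real (bet n k) * (\<Sum>i\<le>n. of_nat i * cnj (h (i, n-i)))"
    proof -
      have t: "of_real (P n i k) * cnj (h (i, n-i))
         = of_real (1 / (real n + 1) - bet n k * (real n / 2)) * cnj (h (i, n-i))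
           + of_real (bet n k) * (of_nat i * cnj (h (i, n-i)))" for i
        by (simp add: P_def algebra_simps)
      show ?thesis unfolding t by (simp add: sum.distrib sum_distrib_left)
    qed
    also have "\<dots> = 0" using cnj_zero_sums[OF h] by simp
    finally show "f (k, n-k) * (\<Sum>i\<le>n. of_real (P n i k) * cnj (h (i, n-i))) = 0" by simp
  qed
  finally show "inner2 (\<lambda>k. f k - (f k - piop n f k)) h = 0" .
qed

definition Cn :: "nat \<Rightarrow> nat \<Rightarrow> nat \<Rightarrow> real" where
  "Cn n i k = (if n = 0 then 0 else
     - P n i k
     + (if 1 \<le> i \<and> 1 \<le> k then P (n-1) (i-1) (k-1) else 0)
     + (if i < n \<and> k < n then P (n-1) i k else 0)
     - (if 1 \<le> i \<and> 1 \<le> k \<and> i < n \<and> k < n then P (n-2) (i-1) (k-1) else 0))"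

lemma sd_zadj: "single_deg n f \<Longrightarrow> single_deg (n-1) (mult_z_adj f)"
  unfolding single_deg_def mult_z_adj_def by simp

lemma sd_wadj: "single_deg n f \<Longrightarrow> single_deg (n-1) (mult_w_adj f)"
  unfolding single_deg_def mult_w_adj_def by simp

lemma sd_zwadj: "single_deg n f \<Longrightarrow> single_deg (n-2) (mult_z_adj (mult_w_adj f))"
  unfolding single_deg_def mult_w_adj_def mult_z_adj_def by simp

lemma proj_val: "single_deg n f \<Longrightarrow>
   proj Mset f (a,b) = f (a,b) - (if a + b = n then (\<Sum>k\<le>n. of_real (P n a k) * f (k, n-k)) else 0)"
  by (simp add: proj_single piop_def)

lemma shL: "(\<Sum>k\<le>m. g (Suc k)) = (\<Sum>k\<le>Suc m. if 1 \<le> k then g k else (0::complex))"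
  by (subst sum.atMost_Suc_shift) simp

lemma shR: "(\<Sum>k\<le>m. g k) = (\<Sum>k\<le>Suc m. if k < Suc m then g k else (0::complex))"
  by (subst sum.atMost_Suc) (auto intro!: sum.cong)

lemma shLR: "(\<Sum>k\<le>m. g (Suc k)) = (\<Sum>k\<le>Suc (Suc m). if 1 \<le> k \<and> k < Suc (Suc m) then g k else (0::complex))"
proof -
  have "(\<Sum>k\<le>m. g (Suc k)) = (\<Sum>k\<le>Suc m. if k < Suc m then g (Suc k) else 0)" by (rule shR)
  also have "\<dots> = (\<Sum>k\<le>Suc (Suc m). if 1 \<le> k then (if k < Suc (Suc m) then g k else 0) else 0)"
    by (subst sum.atMost_Suc_shift[of _ "Suc m"]) simp
  finally show ?thesis by (simp add: if_if_eq_conj conj_commute)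
qed

lemma core_zero_deg:
  assumes f: "single_deg 0 f"
  shows "core_op Mset f (i,j) = 0"
proof -
  have z1: "mult_z_adj f = (\<lambda>_. 0)" "mult_w_adj f = (\<lambda>_. 0)" "mult_z_adj (mult_w_adj f) = (\<lambda>_. 0)"
    using f unfolding single_deg_def mult_z_adj_def mult_w_adj_def by (auto simp: fun_eq_iff)
  have p0: "proj Mset (\<lambda>_. 0) = (\<lambda>_. 0)"
  proof -
    have "single_deg 0 (\<lambda>_. 0::complex)" unfolding single_deg_def by simp
    thus ?thesis by (simp add: proj_single piop_def fun_eq_iff)
  qed
  have z2: "mult_z_adj (\<lambda>_. 0) = (\<lambda>_. 0)" by (simp add: mult_z_adj_def fun_eq_iff)
  have "proj Mset f (i,j) = 0"
    using f unfolding proj_val[OF f] single_deg_def by (cases "i + j = 0") (auto simp: P_def)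
  thus ?thesis unfolding core_op_def z1 z2 p0 by (simp add: mult_z_def mult_w_def)
qed

lemma core_single:
  assumes f: "single_deg n f"
  shows "core_op Mset f (i,j) = (if i + j = n then (\<Sum>k\<le>n. of_real (Cn n i k) * f (k, n-k)) else 0)"
proof (cases "n = 0")
  case True thus ?thesis using core_zero_deg f by (simp add: Cn_def)
next
  case False
  then obtain m where nm: "n = Suc m" by (cases n) auto
  have fz: "\<And>a b. a + b \<noteq> n \<Longrightarrow> f (a,b) = 0" using f unfolding single_deg_def by simp
  have PB: "proj Mset (mult_z_adj f) (a,b) = f (a+1,b) - (if a + b = m then (\<Sum>k\<le>m. of_real (P m a k) * f (k+1, m-k)) else 0)" for a b
    using proj_val[OF sd_zadj[OF f], of a b] by (simp add: nm mult_z_adj_def)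
  have PC: "proj Mset (mult_w_adj f) (a,b) = f (a,b+1) - (if a + b = m then (\<Sum>k\<le>m. of_real (P m a k) * f (k, m-k+1)) else 0)" for a b
    using proj_val[OF sd_wadj[OF f], of a b] by (simp add: nm mult_w_adj_def)
  have core: "core_op Mset f (i,j) = proj Mset f (i,j)
     - (if i = 0 then 0 else proj Mset (mult_z_adj f) (i-1,j))
     - (if j = 0 then 0 else proj Mset (mult_w_adj f) (i,j-1))
     + (if i = 0 then 0 else if j = 0 then 0 else proj Mset (mult_z_adj (mult_w_adj f)) (i-1,j-1))"
    unfolding core_op_def by (simp add: mult_z_def mult_w_def)
  show ?thesis
  proof (cases "i + j = n")
    case False
    have A: "proj Mset f (i,j) = 0" using False fz by (simp add: proj_val[OF f])
    have B: "(if i = 0 then 0 else proj Mset (mult_z_adj f) (i-1,j)) = 0"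
      using False fz nm by (auto simp: PB)
    have C: "(if j = 0 then 0 else proj Mset (mult_w_adj f) (i,j-1)) = 0"
      using False fz nm by (auto simp: PC)
    have D: "(if i = 0 then 0 else if j = 0 then 0 else proj Mset (mult_z_adj (mult_w_adj f)) (i-1,j-1)) = 0"
    proof (cases "i = 0 \<or> j = 0")
      case True thus ?thesis by auto
    next
      case ij: False
      have "proj Mset (mult_z_adj (mult_w_adj f)) (i-1,j-1) = 0"
      proof (cases "m = 0")
        case True
        have "mult_z_adj (mult_w_adj f) = (\<lambda>_. 0)"
          using fz nm True by (auto simp: mult_z_adj_def mult_w_adj_def fun_eq_iff)
        moreover have "proj Mset (\<lambda>_. 0) = (\<lambda>_. 0)"
        proof -
          have "single_deg 0 (\<lambda>_. 0::complex)" unfolding single_deg_def by simp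
          thus ?thesis by (simp add: proj_single piop_def fun_eq_iff)
        qed
        ultimately show ?thesis by simp
      next
        case m0: False
        have ne: "i - 1 + (j - 1) \<noteq> n - 2" using False ij m0 nm by arith
        have "f (i - 1 + 1, j - 1 + 1) = 0" using False ij fz by simp
        thus ?thesis using proj_val[OF sd_zwadj[OF f], of "i-1" "j-1"] ne
          by (simp add: mult_z_adj_def mult_w_adj_def)
      qed
      thus ?thesis using ij by simp
    qed
    show ?thesis unfolding core A B C D using False by simp
  next
    case True
    hence jn: "j = n - i" "i \<le> n" by auto
    define F where "F k = f (k, n-k)" for k
    have A: "proj Mset f (i,j) = f (i,j) - (\<Sum>k\<le>n. of_real (P n i k) * F k)"
      using True by (simp add: proj_val[OF f] F_def)
    have B: "i \<ge> 1 \<Longrightarrow> proj Mset (mult_z_adj f) (i-1,j) = f (i,j) - (\<Sum>k\<le>n. of_real (if 1 \<le> k then P (n-1) (i-1) (k-1) else 0) * F k)"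
    proof -
      assume i1: "i \<ge> 1"
      have "(\<Sum>k\<le>m. of_real (P m (i-1) k) * f (k+1, m-k)) = (\<Sum>k\<le>m. (\<lambda>k. of_real (P m (i-1) (k-1)) * F k) (Suc k))"
        by (simp add: F_def nm)
      also have "\<dots> = (\<Sum>k\<le>Suc m. if 1 \<le> k then (\<lambda>k. of_real (P m (i-1) (k-1)) * F k) k else 0)"
        by (rule shL)
      also have "\<dots> = (\<Sum>k\<le>n. of_real (if 1 \<le> k then P (n-1) (i-1) (k-1) else 0) * F k)"
        by (intro sum.cong) (auto simp: nm)
      finally show ?thesis using i1 True nm by (simp add: PB)
    qed
    have C: "j \<ge> 1 \<Longrightarrow> proj Mset (mult_w_adj f) (i,j-1) = f (i,j) - (\<Sum>k\<le>n. of_real (if k < n then P (n-1) i k else 0) * F k)"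
    proof -
      assume j1: "j \<ge> 1"
      have "(\<Sum>k\<le>m. of_real (P m i k) * f (k, m-k+1)) = (\<Sum>k\<le>m. (\<lambda>k. of_real (P m i k) * F k) k)"
        by (intro sum.cong refl) (simp add: F_def nm Suc_diff_le)
      also have "\<dots> = (\<Sum>k\<le>Suc m. if k < Suc m then (\<lambda>k. of_real (P m i k) * F k) k else 0)"
        by (rule shR)
      also have "\<dots> = (\<Sum>k\<le>n. of_real (if k < n then P (n-1) i k else 0) * F k)"
        by (intro sum.cong) (auto simp: nm)
      finally show ?thesis using j1 True nm by (simp add: PC)
    qed
    have D: "i \<ge> 1 \<Longrightarrow> j \<ge> 1 \<Longrightarrow> proj Mset (mult_z_adj (mult_w_adj f)) (i-1,j-1)
         = f (i,j) - (\<Sum>k\<le>n. of_real (if 1 \<le> k \<and> k < n then P (n-2) (i-1) (k-1) else 0) * F k)"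
    proof -
      assume i1: "i \<ge> 1" and j1: "j \<ge> 1"
      then obtain p where np: "n = Suc (Suc p)" using True by (cases n; cases "n - 1") auto
      have PD: "proj Mset (mult_z_adj (mult_w_adj f)) (a,b) = f (a+1,b+1) - (if a + b = p then (\<Sum>k\<le>p. of_real (P p a k) * f (k+1, p-k+1)) else 0)" for a b
        using proj_val[OF sd_zwadj[OF f], of a b] by (simp add: np mult_z_adj_def mult_w_adj_def)
      have "(\<Sum>k\<le>p. of_real (P p (i-1) k) * f (k+1, p-k+1)) = (\<Sum>k\<le>p. (\<lambda>k. of_real (P p (i-1) (k-1)) * F k) (Suc k))"
        by (intro sum.cong refl) (simp add: F_def np Suc_diff_le)
      also have "\<dots> = (\<Sum>k\<le>Suc (Suc p). if 1 \<le> k \<and> k < Suc (Suc p) then (\<lambda>k. of_real (P p (i-1) (k-1)) * F k) k else 0)"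
        by (rule shLR)
      also have "\<dots> = (\<Sum>k\<le>n. of_real (if 1 \<le> k \<and> k < n then P (n-2) (i-1) (k-1) else 0) * F k)"
        by (intro sum.cong) (auto simp: np)
      finally show ?thesis using i1 j1 True np by (simp add: PD)
    qed
    define SA where "SA = (\<Sum>k\<le>n. of_real (P n i k) * F k)"
    define SB where "SB = (\<Sum>k\<le>n. of_real (if 1 \<le> k then P (n-1) (i-1) (k-1) else 0) * F k)"
    define SC where "SC = (\<Sum>k\<le>n. of_real (if k < n then P (n-1) i k else 0) * F k)"
    define SD where "SD = (\<Sum>k\<le>n. of_real (if 1 \<le> k \<and> k < n then P (n-2) (i-1) (k-1) else 0) * F k)"
    have "core_op Mset f (i,j) = - SA + (if 1 \<le> i then SB else 0) + (if i < n then SC else 0)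
        - (if 1 \<le> i \<and> i < n then SD else 0)"
    proof -
      have A': "proj Mset f (i,j) = f (i,j) - SA" using A unfolding SA_def .
      have B': "1 \<le> i \<Longrightarrow> proj Mset (mult_z_adj f) (i-1,j) = f (i,j) - SB" using B unfolding SB_def .
      have C': "1 \<le> j \<Longrightarrow> proj Mset (mult_w_adj f) (i,j-1) = f (i,j) - SC" using C unfolding SC_def .
      have D': "1 \<le> i \<Longrightarrow> 1 \<le> j \<Longrightarrow> proj Mset (mult_z_adj (mult_w_adj f)) (i-1,j-1) = f (i,j) - SD"
        using D unfolding SD_def .
      have j1: "1 \<le> j \<longleftrightarrow> i < n" using jn by auto
      show ?thesis
      proof (cases "i = 0")
        case True
        hence "i < n" using nm by simp
        thus ?thesis unfolding core A' using C' j1 True by simp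
      next
        case i0: False
        show ?thesis
        proof (cases "i < n")
          case True thus ?thesis unfolding core A' using B' C' D' j1 i0 by simp
        next
          case False
          hence "j = 0" using jn by simp
          thus ?thesis unfolding core A' using B' i0 False by simp
        qed
      qed
    qed
    also have "\<dots> = (\<Sum>k\<le>n. of_real (Cn n i k) * F k)"
    proof -
      have "of_real (Cn n i k) * F k = - (of_real (P n i k) * F k)
          + (if 1 \<le> i then of_real (if 1 \<le> k then P (n-1) (i-1) (k-1) else 0) * F k else 0)
          + (if i < n then of_real (if k < n then P (n-1) i k else 0) * F k else 0)
          - (if 1 \<le> i \<and> i < n then of_real (if 1 \<le> k \<and> k < n then P (n-2) (i-1) (k-1) else 0) * F k else 0)" for k
        unfolding Cn_def using nm by (auto simp: algebra_simps)
      thus ?thesis unfolding SA_def SB_def SC_def SD_def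
        by (simp add: sum.distrib sum_subtractf sum_negf)
    qed
    finally show ?thesis using True by (simp add: F_def)
  qed
qed

lemma P_gen: "P m i k = 1 / (real m + 1) + 12 / (real m * (real m + 1) * (real m + 2)) * ((real i - real m / 2) * (real k - real m / 2))"
proof -
  have aux: "12 * a / D * b = 12 / D * (b * a)" for a b D :: real
    by (cases "D = 0") (simp_all add: field_simps)
  show ?thesis unfolding P_def bet_def aux ..
qed

lemma P_sym: "P m i k = P m k i"
  unfolding P_gen by (simp only: mult.commute[of "real i - real m / 2"])

lemma Cn_sym: "Cn n i k = Cn n k i"
  unfolding Cn_def P_sym[of n k i] P_sym[of "n-1" "k-1" "i-1"] P_sym[of "n-1" k i] P_sym[of "n-2" "k-1" "i-1"]
  by (cases "1 \<le> i"; cases "1 \<le> k"; cases "i < n"; cases "k < n") simp_all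

lemma sc_ids: fixes y :: real assumes "y \<ge> 3"
  shows "- (1 / (y + 1)) + 2 * (1 / y) - 1 / (y - 1) + 12 / ((y - 1) * y * (y + 1)) / 2 = 4 / ((y - 1) * y * (y + 1))"
    "- (12 / (y * (y + 1) * (y + 2))) + 2 * (12 / ((y - 1) * y * (y + 1))) - 12 / ((y - 2) * (y - 1) * y) = - 144 / ((y - 2) * (y - 1) * y * (y + 1) * (y + 2))"
    "- (1 / (y + 1)) + 1 / y - 12 / ((y - 1) * y * (y + 1)) * (y - 1) / 4 = - 2 / (y * (y + 1))"
    "12 / (y * (y + 1) * (y + 2)) * y / 2 - 12 / ((y - 1) * y * (y + 1)) * (y - 1) / 2 = - 12 / (y * (y + 1) * (y + 2))"
    "- (1 / (y + 1) + 12 / (y * (y + 1) * (y + 2)) * (y * y / 4)) + (1 / y + 12 / ((y - 1) * y * (y + 1)) * ((y - 1) * (y - 1) / 4)) = 4 * (y - 1) / (y * (y + 1) * (y + 2))"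
    "- (1 / (y + 1) - 12 / (y * (y + 1) * (y + 2)) * (y * y / 4)) = 2 * (y - 1) / ((y + 1) * (y + 2))"
    "2 * (4 * (y - 1) / (y * (y + 1) * (y + 2)))\<^sup>2 + 2 * (2 * (y - 1) / ((y + 1) * (y + 2)))\<^sup>2
    + 4 * ((y - 1) * (- 2 / (y * (y + 1)))\<^sup>2 + (- 12 / (y * (y + 1) * (y + 2)))\<^sup>2 * ((y - 2) * (y - 1) * y / 12))
    + (y - 1)\<^sup>2 * (4 / ((y - 1) * y * (y + 1)))\<^sup>2
    + (- 144 / ((y - 2) * (y - 1) * y * (y + 1) * (y + 2)))\<^sup>2 * ((y - 2) * (y - 1) * y / 12)\<^sup>2
    = 8 / y\<^sup>2"
proof -
  have nz: "y \<noteq> 0" "y - 1 \<noteq> 0" "y + 1 \<noteq> 0" "y - 2 \<noteq> 0" "y + 2 \<noteq> 0" using assms by auto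
  show "- (1 / (y + 1)) + 2 * (1 / y) - 1 / (y - 1) + 12 / ((y - 1) * y * (y + 1)) / 2 = 4 / ((y - 1) * y * (y + 1))"
    using nz by (simp add: divide_simps; algebra)
  show "- (12 / (y * (y + 1) * (y + 2))) + 2 * (12 / ((y - 1) * y * (y + 1))) - 12 / ((y - 2) * (y - 1) * y) = - 144 / ((y - 2) * (y - 1) * y * (y + 1) * (y + 2))"
    using nz by (simp add: divide_simps; algebra)
  show "- (1 / (y + 1)) + 1 / y - 12 / ((y - 1) * y * (y + 1)) * (y - 1) / 4 = - 2 / (y * (y + 1))"
    using nz by (simp add: divide_simps; algebra)
  show "12 / (y * (y + 1) * (y + 2)) * y / 2 - 12 / ((y - 1) * y * (y + 1)) * (y - 1) / 2 = - 12 / (y * (y + 1) * (y + 2))"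
    using nz by (simp add: divide_simps; algebra)
  show "- (1 / (y + 1) + 12 / (y * (y + 1) * (y + 2)) * (y * y / 4)) + (1 / y + 12 / ((y - 1) * y * (y + 1)) * ((y - 1) * (y - 1) / 4)) = 4 * (y - 1) / (y * (y + 1) * (y + 2))"
    using nz by (simp add: divide_simps; algebra)
  show "- (1 / (y + 1) - 12 / (y * (y + 1) * (y + 2)) * (y * y / 4)) = 2 * (y - 1) / ((y + 1) * (y + 2))"
    using nz by (simp add: divide_simps)
  show "2 * (4 * (y - 1) / (y * (y + 1) * (y + 2)))\<^sup>2 + 2 * (2 * (y - 1) / ((y + 1) * (y + 2)))\<^sup>2
    + 4 * ((y - 1) * (- 2 / (y * (y + 1)))\<^sup>2 + (- 12 / (y * (y + 1) * (y + 2)))\<^sup>2 * ((y - 2) * (y - 1) * y / 12))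
    + (y - 1)\<^sup>2 * (4 / ((y - 1) * y * (y + 1)))\<^sup>2
    + (- 144 / ((y - 2) * (y - 1) * y * (y + 1) * (y + 2)))\<^sup>2 * ((y - 2) * (y - 1) * y / 12)\<^sup>2
    = 8 / y\<^sup>2"
    using nz by (simp add: divide_simps; algebra)
qed

lemma split3: fixes n :: nat assumes "1 \<le> n" shows "(\<Sum>i\<le>n. g i) = g 0 + (\<Sum>i\<in>{1..<n}. g i) + (g n :: real)"
proof -
  have "{..n} = insert 0 (insert n {1..<n})" using assms by auto
  thus ?thesis using assms by (simp add: algebra_simps)
qed

lemma usum1: "(\<Sum>i\<le>n. real i - real n / 2) = 0"
  by (subst sum_subtractf) (simp add: sum_id1 field_simps)

lemma usum2: "(\<Sum>i\<le>n. (real i - real n / 2)\<^sup>2) = real n * (real n + 1) * (real n + 2) / 12"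
proof -
  have "(\<Sum>i\<le>n. (real i - real n / 2)\<^sup>2) = (\<Sum>i\<le>n. (real i)\<^sup>2) - real n * (\<Sum>i\<le>n. real i) + (real n + 1) * (real n)\<^sup>2 / 4"
    by (simp add: power2_diff sum.distrib sum_subtractf sum_distrib_left algebra_simps power2_eq_square)
  also have "\<dots> = real n * (real n + 1) * (real n + 2) / 12"
    unfolding sum_id1 sum_id2 by (simp add: field_simps power2_eq_square)
  finally show ?thesis .
qed

context
  fixes n :: nat
  assumes n3: "3 \<le> n"
begin

definition U2 :: real where "U2 = (real n - 2) * (real n - 1) * real n / 12"

lemma xpos: "real n \<ge> 3" using n3 by simp

lemma rn1: "real (n - 1) = real n - 1" using n3 by (simp add: of_nat_diff)
lemma rn2: "real (n - 2) = real n - 2" using n3 by (simp add: of_nat_diff)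

lemma T1: "(\<Sum>i\<in>{1..<n}. real i - real n / 2) = 0"
  using usum1[of n] split3[of n "\<lambda>i. real i - real n / 2"] n3 by simp

lemma T2: "(\<Sum>i\<in>{1..<n}. (real i - real n / 2)\<^sup>2) = U2"
proof -
  have "real n * (real n + 1) * (real n + 2) / 12 = (real n / 2)\<^sup>2 + (\<Sum>i\<in>{1..<n}. (real i - real n / 2)\<^sup>2) + (real n / 2)\<^sup>2"
    using usum2[of n] split3[of n "\<lambda>i. (real i - real n / 2)\<^sup>2"] n3 by simp
  thus ?thesis unfolding U2_def by (simp add: field_simps power2_eq_square)
qed

lemma T0: "(\<Sum>i\<in>{1..<n}. (c::real)) = (real n - 1) * c"
proof -
  have "(\<Sum>i\<in>{1..<n}. (c::real)) = real (n - 1) * c" by (simp only: sum_constant card_atLeastLessThan)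
  thus ?thesis unfolding rn1 .
qed

lemma Tlin: "(\<Sum>i\<in>{1..<n}. (c + d * (real i - real n / 2))\<^sup>2) = (real n - 1) * c\<^sup>2 + d\<^sup>2 * U2"
proof -
  have "(\<Sum>i\<in>{1..<n}. (c + d * (real i - real n / 2))\<^sup>2)
      = (\<Sum>i\<in>{1..<n}. c\<^sup>2) + 2 * c * d * (\<Sum>i\<in>{1..<n}. real i - real n / 2) + d\<^sup>2 * (\<Sum>i\<in>{1..<n}. (real i - real n / 2)\<^sup>2)"
    by (simp add: power2_sum sum.distrib sum_distrib_left power_mult_distrib mult_ac)
  thus ?thesis unfolding T0 T1 T2 by simp
qed

lemma Tlin': "(\<Sum>i\<in>{1..<n}. (c - d * (real i - real n / 2))\<^sup>2) = (real n - 1) * c\<^sup>2 + d\<^sup>2 * U2"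
  using Tlin[of c "-d"] by simp

lemma Tbil: "(\<Sum>k\<in>{1..<n}. \<Sum>i\<in>{1..<n}. (a + b * ((real i - real n / 2) * (real k - real n / 2)))\<^sup>2)
   = (real n - 1)\<^sup>2 * a\<^sup>2 + b\<^sup>2 * U2\<^sup>2"
proof -
  have e: "(\<Sum>k\<in>{1..<n}. \<Sum>i\<in>{1..<n}. (a + b * ((real i - real n / 2) * (real k - real n / 2)))\<^sup>2)
     = (\<Sum>k\<in>{1..<n}. (real n - 1) * a\<^sup>2 + (b * (real k - real n / 2))\<^sup>2 * U2)"
    using Tlin[of a "b * (real k - real n / 2)" for k] by (simp add: mult_ac)
  have d: "(\<Sum>k\<in>{1..<n}. (real n - 1) * a\<^sup>2 + (b * (real k - real n / 2))\<^sup>2 * U2)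
     = (\<Sum>k\<in>{1..<n}. (real n - 1) * a\<^sup>2) + (\<Sum>k\<in>{1..<n}. (b * (real k - real n / 2))\<^sup>2 * U2)"
    by (rule sum.distrib)
  have t0: "(\<Sum>k\<in>{1..<n}. (real n - 1) * a\<^sup>2) = (real n - 1) * ((real n - 1) * a\<^sup>2)" by (rule T0)
  have "(\<Sum>k\<in>{1..<n}. (b * (real k - real n / 2))\<^sup>2 * U2) = b\<^sup>2 * U2 * (\<Sum>k\<in>{1..<n}. (real k - real n / 2)\<^sup>2)"
    by (simp add: sum_distrib_left power_mult_distrib mult_ac)
  hence t1: "(\<Sum>k\<in>{1..<n}. (b * (real k - real n / 2))\<^sup>2 * U2) = b\<^sup>2 * U2 * U2" unfolding T2 .
  show ?thesis unfolding e d t0 t1 by algebra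
qed

end

context
  fixes n :: nat
  assumes n3: "3 \<le> n"
begin

definition ca :: real where "ca = 4 / ((real n - 1) * real n * (real n + 1))"
definition cb :: real where "cb = - 144 / ((real n - 2) * (real n - 1) * real n * (real n + 1) * (real n + 2))"
definition c0 :: real where "c0 = - 2 / (real n * (real n + 1))"
definition d0 :: real where "d0 = - 12 / (real n * (real n + 1) * (real n + 2))"
definition c00 :: real where "c00 = 4 * (real n - 1) / (real n * (real n + 1) * (real n + 2))"
definition c0n :: real where "c0n = 2 * (real n - 1) / ((real n + 1) * (real n + 2))"

lemma xpos': "real n \<ge> 3" using n3 by simp
lemma rn1': "real (n - 1) = real n - 1" using n3 by (simp add: of_nat_diff)
lemma rn2': "real (n - 2) = real n - 2" using n3 by (simp add: of_nat_diff)
lemma b1: "real (n-1) + 1 = real n" "real (n-1) + 2 = real n + 1" unfolding rn1' by simp_all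
lemma b2: "real (n-2) + 1 = real n - 1" "real (n-2) + 2 = real n" unfolding rn2' by simp_all

lemma Cn_int:
  assumes "1 \<le> i" "i < n" "1 \<le> k" "k < n"
  shows "Cn n i k = ca + cb * ((real i - real n / 2) * (real k - real n / 2))"
proof -
  define u where "u = real i - real n / 2"
  define v where "v = real k - real n / 2"
  have ri: "real (i - 1) = real i - 1" "real (k - 1) = real k - 1" using assms by (simp_all add: of_nat_diff)
  have e: "Cn n i k = - P n i k + P (n-1) (i-1) (k-1) + P (n-1) i k - P (n-2) (i-1) (k-1)"
    unfolding Cn_def using assms n3 by simp
  have a1: "real (i-1) - real (n-1) / 2 = u - 1/2" "real (k-1) - real (n-1) / 2 = v - 1/2"
    unfolding ri rn1' u_def v_def by (simp_all add: field_simps)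
  have a2: "real i - real (n-1) / 2 = u + 1/2" "real k - real (n-1) / 2 = v + 1/2"
    unfolding rn1' u_def v_def by (simp_all add: field_simps)
  have a3: "real (i-1) - real (n-2) / 2 = u" "real (k-1) - real (n-2) / 2 = v"
    unfolding ri rn2' u_def v_def by (simp_all add: field_simps)
  define A where "A = 1 / (real n + 1)"
  define Bx where "Bx = 1 / real n"
  define C where "C = 1 / (real n - 1)"
  define B0 where "B0 = 12 / (real n * (real n + 1) * (real n + 2))"
  define B1 where "B1 = 12 / ((real n - 1) * real n * (real n + 1))"
  define B2 where "B2 = 12 / ((real n - 2) * (real n - 1) * real n)"
  have p1: "P n i k = A + B0 * (u * v)"
    unfolding P_gen u_def v_def A_def B0_def ..
  have p2: "P (n-1) (i-1) (k-1) = Bx + B1 * ((u - 1/2) * (v - 1/2))"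
    unfolding P_gen unfolding a1 b1 unfolding rn1' Bx_def B1_def ..
  have p3: "P (n-1) i k = Bx + B1 * ((u + 1/2) * (v + 1/2))"
    unfolding P_gen unfolding a2 b1 unfolding rn1' Bx_def B1_def ..
  have p4: "P (n-2) (i-1) (k-1) = C + B2 * (u * v)"
    unfolding P_gen unfolding a3 b2 unfolding rn2' C_def B2_def ..
  have "Cn n i k = (- A + 2 * Bx - C + B1 / 2) + (- B0 + 2 * B1 - B2) * (u * v)"
    unfolding e p1 p2 p3 p4 by (simp add: algebra_simps)
  also have "- A + 2 * Bx - C + B1 / 2 = ca"
    unfolding ca_def A_def Bx_def C_def B1_def using sc_ids(1)[OF xpos'] by simp
  also have "- B0 + 2 * B1 - B2 = cb"
    unfolding cb_def B0_def B1_def B2_def using sc_ids(2)[OF xpos'] by simp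
  finally show ?thesis unfolding u_def v_def .
qed

lemma Cn_edge0:
  assumes "1 \<le> k" "k < n"
  shows "Cn n 0 k = c0 + d0 * (real k - real n / 2)"
proof -
  define v where "v = real k - real n / 2"
  have e: "Cn n 0 k = - P n 0 k + P (n-1) 0 k" unfolding Cn_def using assms n3 by simp
  have a2: "real k - real (n-1) / 2 = v + 1/2" unfolding rn1' v_def by (simp add: field_simps)
  define A where "A = 1 / (real n + 1)"
  define Bx where "Bx = 1 / real n"
  define B0 where "B0 = 12 / (real n * (real n + 1) * (real n + 2))"
  define B1 where "B1 = 12 / ((real n - 1) * real n * (real n + 1))"
  have p1: "P n 0 k = A + B0 * ((0 - real n / 2) * v)"
    unfolding P_gen v_def A_def B0_def by simp
  have p2: "P (n-1) 0 k = Bx + B1 * ((0 - (real n - 1) / 2) * (v + 1/2))"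
    unfolding P_gen unfolding a2 b1 unfolding rn1' Bx_def B1_def by simp
  have "Cn n 0 k = (- A + Bx - B1 * (real n - 1) / 4) + (B0 * real n / 2 - B1 * (real n - 1) / 2) * v"
    unfolding e p1 p2 by (simp add: field_simps)
  also have "- A + Bx - B1 * (real n - 1) / 4 = c0"
    unfolding c0_def A_def Bx_def B1_def using sc_ids(3)[OF xpos'] by simp
  also have "B0 * real n / 2 - B1 * (real n - 1) / 2 = d0"
    unfolding d0_def B0_def B1_def using sc_ids(4)[OF xpos'] by simp
  finally show ?thesis unfolding v_def .
qed

lemma Cn_edgen:
  assumes "1 \<le> k" "k < n"
  shows "Cn n n k = c0 - d0 * (real k - real n / 2)"
proof -
  define v where "v = real k - real n / 2"
  have e: "Cn n n k = - P n n k + P (n-1) (n-1) (k-1)" unfolding Cn_def using assms n3 by simp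
  have rk: "real (k - 1) = real k - 1" using assms by (simp add: of_nat_diff)
  have a1: "real (k-1) - real (n-1) / 2 = v - 1/2" unfolding rk rn1' v_def by (simp add: field_simps)
  have a0: "real (n-1) - real (n-1) / 2 = (real n - 1) / 2" unfolding rn1' by (simp add: field_simps)
  define A where "A = 1 / (real n + 1)"
  define Bx where "Bx = 1 / real n"
  define B0 where "B0 = 12 / (real n * (real n + 1) * (real n + 2))"
  define B1 where "B1 = 12 / ((real n - 1) * real n * (real n + 1))"
  have p1: "P n n k = A + B0 * ((real n - real n / 2) * v)"
    unfolding P_gen v_def A_def B0_def by simp
  have p2: "P (n-1) (n-1) (k-1) = Bx + B1 * (((real n - 1) / 2) * (v - 1/2))"
    unfolding P_gen unfolding a1 a0 b1 unfolding rn1' Bx_def B1_def by simp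
  have "Cn n n k = (- A + Bx - B1 * (real n - 1) / 4) - (B0 * real n / 2 - B1 * (real n - 1) / 2) * v"
    unfolding e p1 p2 by (simp add: field_simps)
  also have "- A + Bx - B1 * (real n - 1) / 4 = c0"
    unfolding c0_def A_def Bx_def B1_def using sc_ids(3)[OF xpos'] by simp
  also have "B0 * real n / 2 - B1 * (real n - 1) / 2 = d0"
    unfolding d0_def B0_def B1_def using sc_ids(4)[OF xpos'] by simp
  finally show ?thesis unfolding v_def .
qed

lemma Cn_corners: "Cn n 0 0 = c00" "Cn n n n = c00" "Cn n 0 n = c0n" "Cn n n 0 = c0n"
proof -
  define A where "A = 1 / (real n + 1)"
  define Bx where "Bx = 1 / real n"
  define B0 where "B0 = 12 / (real n * (real n + 1) * (real n + 2))"
  define B1 where "B1 = 12 / ((real n - 1) * real n * (real n + 1))"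
  have a0: "real (n-1) - real (n-1) / 2 = (real n - 1) / 2" unfolding rn1' by (simp add: field_simps)
  have e1: "Cn n 0 0 = - P n 0 0 + P (n-1) 0 0" unfolding Cn_def using n3 by simp
  have e2: "Cn n n n = - P n n n + P (n-1) (n-1) (n-1)" unfolding Cn_def using n3 by simp
  have e3: "Cn n 0 n = - P n 0 n" unfolding Cn_def using n3 by simp
  have q1: "P n 0 0 = A + B0 * (real n * real n / 4)" "P n n n = A + B0 * (real n * real n / 4)"
    "P n 0 n = A - B0 * (real n * real n / 4)"
    unfolding P_gen A_def B0_def by (simp_all add: algebra_simps)
  have q2: "P (n-1) 0 0 = Bx + B1 * ((real n - 1) * (real n - 1) / 4)"
    "P (n-1) (n-1) (n-1) = Bx + B1 * ((real n - 1) * (real n - 1) / 4)"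
    unfolding P_gen unfolding a0 b1 unfolding rn1' Bx_def B1_def by (simp_all add: algebra_simps)
  have cc: "- (A + B0 * (real n * real n / 4)) + (Bx + B1 * ((real n - 1) * (real n - 1) / 4)) = c00"
    unfolding c00_def A_def Bx_def B0_def B1_def using sc_ids(5)[OF xpos'] by simp
  have cn: "- (A - B0 * (real n * real n / 4)) = c0n"
    unfolding c0n_def A_def B0_def using sc_ids(6)[OF xpos'] by simp
  show "Cn n 0 0 = c00" unfolding e1 q1 q2 cc ..
  show "Cn n n n = c00" unfolding e2 q1 q2 cc ..
  show "Cn n 0 n = c0n" unfolding e3 q1 cn ..
  show "Cn n n 0 = c0n" using Cn_sym[of n n 0] unfolding e3 q1 cn by simp
qed

end

lemma HS_big:
  assumes n3: "3 \<le> n"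
  shows "(\<Sum>k\<le>n. \<Sum>i\<le>n. (Cn n i k)\<^sup>2) = 8 / (real n)\<^sup>2"
proof -
  have n1: "1 \<le> n" using n3 by simp
  define T where "T = {1..<n}"
  have G: "(\<Sum>i\<le>n. (Cn n i k)\<^sup>2) = (Cn n 0 k)\<^sup>2 + (\<Sum>i\<in>T. (Cn n i k)\<^sup>2) + (Cn n n k)\<^sup>2" for k
    unfolding T_def by (rule split3[OF n1])
  have G0: "(\<Sum>i\<le>n. (Cn n i 0)\<^sup>2) = (c00 n)\<^sup>2 + ((real n - 1) * (c0 n)\<^sup>2 + (d0 n)\<^sup>2 * U2 n) + (c0n n)\<^sup>2"
  proof -
    have "(\<Sum>i\<in>T. (Cn n i 0)\<^sup>2) = (\<Sum>i\<in>T. (c0 n + d0 n * (real i - real n / 2))\<^sup>2)"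
      unfolding T_def by (intro sum.cong refl) (simp add: Cn_sym[of n _ 0] Cn_edge0[OF n3])
    also have "\<dots> = (real n - 1) * (c0 n)\<^sup>2 + (d0 n)\<^sup>2 * U2 n" unfolding T_def by (rule Tlin[OF n3])
    finally show ?thesis unfolding G Cn_corners[OF n3] by simp
  qed
  have Gn: "(\<Sum>i\<le>n. (Cn n i n)\<^sup>2) = (c0n n)\<^sup>2 + ((real n - 1) * (c0 n)\<^sup>2 + (d0 n)\<^sup>2 * U2 n) + (c00 n)\<^sup>2"
  proof -
    have "(\<Sum>i\<in>T. (Cn n i n)\<^sup>2) = (\<Sum>i\<in>T. (c0 n - d0 n * (real i - real n / 2))\<^sup>2)"
      unfolding T_def by (intro sum.cong refl) (simp add: Cn_sym[of n _ n] Cn_edgen[OF n3])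
    also have "\<dots> = (real n - 1) * (c0 n)\<^sup>2 + (d0 n)\<^sup>2 * U2 n" unfolding T_def by (rule Tlin'[OF n3])
    finally show ?thesis unfolding G Cn_corners[OF n3] by simp
  qed
  have GT: "(\<Sum>k\<in>T. \<Sum>i\<le>n. (Cn n i k)\<^sup>2)
      = ((real n - 1) * (c0 n)\<^sup>2 + (d0 n)\<^sup>2 * U2 n) + ((real n - 1)\<^sup>2 * (ca n)\<^sup>2 + (cb n)\<^sup>2 * (U2 n)\<^sup>2)
        + ((real n - 1) * (c0 n)\<^sup>2 + (d0 n)\<^sup>2 * U2 n)"
  proof -
    have "(\<Sum>k\<in>T. \<Sum>i\<le>n. (Cn n i k)\<^sup>2) = (\<Sum>k\<in>T. (c0 n + d0 n * (real k - real n / 2))\<^sup>2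
        + (\<Sum>i\<in>T. (ca n + cb n * ((real i - real n / 2) * (real k - real n / 2)))\<^sup>2)
        + (c0 n - d0 n * (real k - real n / 2))\<^sup>2)"
    proof (rule sum.cong[OF refl])
      fix k assume k: "k \<in> T"
      hence k1: "1 \<le> k" "k < n" unfolding T_def by auto
      have "(\<Sum>i\<in>T. (Cn n i k)\<^sup>2) = (\<Sum>i\<in>T. (ca n + cb n * ((real i - real n / 2) * (real k - real n / 2)))\<^sup>2)"
        unfolding T_def
      proof (rule sum.cong[OF refl])
        fix i assume "i \<in> {1..<n}"
        hence i1: "1 \<le> i" "i < n" by auto
        show "(Cn n i k)\<^sup>2 = (ca n + cb n * ((real i - real n / 2) * (real k - real n / 2)))\<^sup>2"
          unfolding Cn_int[OF n3 i1 k1] ..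
      qed
      thus "(\<Sum>i\<le>n. (Cn n i k)\<^sup>2) = (c0 n + d0 n * (real k - real n / 2))\<^sup>2
        + (\<Sum>i\<in>T. (ca n + cb n * ((real i - real n / 2) * (real k - real n / 2)))\<^sup>2)
        + (c0 n - d0 n * (real k - real n / 2))\<^sup>2"
        unfolding G Cn_edge0[OF n3 k1] Cn_edgen[OF n3 k1] by simp
    qed
    also have "\<dots> = (\<Sum>k\<in>T. (c0 n + d0 n * (real k - real n / 2))\<^sup>2)
        + (\<Sum>k\<in>T. \<Sum>i\<in>T. (ca n + cb n * ((real i - real n / 2) * (real k - real n / 2)))\<^sup>2)
        + (\<Sum>k\<in>T. (c0 n - d0 n * (real k - real n / 2))\<^sup>2)"
      by (simp add: sum.distrib)
    also have "\<dots> = ((real n - 1) * (c0 n)\<^sup>2 + (d0 n)\<^sup>2 * U2 n) + ((real n - 1)\<^sup>2 * (ca n)\<^sup>2 + (cb n)\<^sup>2 * (U2 n)\<^sup>2)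
        + ((real n - 1) * (c0 n)\<^sup>2 + (d0 n)\<^sup>2 * U2 n)"
      unfolding T_def Tlin[OF n3] Tlin'[OF n3] Tbil[OF n3] ..
    finally show ?thesis .
  qed
  have "(\<Sum>k\<le>n. \<Sum>i\<le>n. (Cn n i k)\<^sup>2) = (\<Sum>i\<le>n. (Cn n i 0)\<^sup>2) + (\<Sum>k\<in>T. \<Sum>i\<le>n. (Cn n i k)\<^sup>2) + (\<Sum>i\<le>n. (Cn n i n)\<^sup>2)"
    unfolding T_def by (rule split3[OF n1])
  also have "\<dots> = 2 * (c00 n)\<^sup>2 + 2 * (c0n n)\<^sup>2 + 4 * ((real n - 1) * (c0 n)\<^sup>2 + (d0 n)\<^sup>2 * U2 n)
      + (real n - 1)\<^sup>2 * (ca n)\<^sup>2 + (cb n)\<^sup>2 * (U2 n)\<^sup>2"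
    unfolding G0 Gn GT by simp
  also have "\<dots> = 8 / (real n)\<^sup>2"
    unfolding c00_def[OF n3] c0n_def[OF n3] c0_def[OF n3] d0_def[OF n3] U2_def[OF n3] ca_def[OF n3] cb_def[OF n3]
    by (rule sc_ids(7)) (use n3 in simp)
  finally show ?thesis .
qed

definition hs :: "nat \<Rightarrow> real" where
  "hs n = (\<Sum>k\<le>n. \<Sum>i\<le>n. (Cn n i k)\<^sup>2)"

lemma hs_0: "hs 0 = 0" unfolding hs_def Cn_def by simp

lemma hs_1: "hs 1 = 0"
  unfolding hs_def by (simp add: Cn_def P_gen)

lemma hs_2: "hs 2 = 1"
  unfolding hs_def by (simp add: Cn_def P_gen numeral_2_eq_2 power2_eq_square)

lemma hs_formula: "hs n = 8 / (real n)\<^sup>2 - (if n = 1 then 8 else 0) - (if n = 2 then 1 else 0)"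
proof -
  consider "n = 0" | "n = 1" | "n = 2" | "3 \<le> n" by linarith
  thus ?thesis
  proof cases
    case 1 thus ?thesis by (simp add: hs_0)
  next
    case 2 thus ?thesis using hs_1 by simp
  next
    case 3 thus ?thesis using hs_2 by simp
  next
    case 4 thus ?thesis unfolding hs_def using HS_big[OF 4] by simp
  qed
qed

lemma hs_sums: "hs sums (4/3 * pi\<^sup>2 - 9)"
proof -
  have "(\<lambda>i. 1 / (real (i + 1))\<^sup>2) sums (pi\<^sup>2 / 6)"
    using inverse_squares_sums by (simp add: add.commute)
  hence "(\<lambda>n. 1 / (real n)\<^sup>2) sums (pi\<^sup>2 / 6 + (\<Sum>i<1. 1 / (real i)\<^sup>2))"
    by (subst (asm) sums_iff_shift[of "\<lambda>n. 1 / (real n)\<^sup>2" 1])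
  hence s1: "(\<lambda>n. 1 / (real n)\<^sup>2) sums (pi\<^sup>2 / 6)" by simp
  have s2: "(\<lambda>n. 8 * (1 / (real n)\<^sup>2)) sums (8 * (pi\<^sup>2 / 6))" by (rule sums_mult[OF s1])
  have s3: "(\<lambda>n. if n = 1 then (8::real) else 0) sums 8" using sums_single[of 1 "\<lambda>_. 8::real"] by simp
  have s4: "(\<lambda>n. if n = 2 then (1::real) else 0) sums 1" using sums_single[of 2 "\<lambda>_. 1::real"] by simp
  have "(\<lambda>n. 8 * (1 / (real n)\<^sup>2) - (if n = 1 then 8 else 0) - (if n = 2 then 1 else 0)) sums (8 * (pi\<^sup>2 / 6) - 8 - 1)"
    by (intro sums_diff s2 s3 s4)
  moreover have "(\<lambda>n. 8 * (1 / (real n)\<^sup>2) - (if n = 1 then 8 else 0) - (if n = 2 then 1 else 0)) = hs"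
    by (rule ext) (simp add: hs_formula)
  moreover have "8 * (pi\<^sup>2 / 6) - 8 - 1 = 4/3 * pi\<^sup>2 - 9" by simp
  ultimately show ?thesis by simp
qed

lemma basis_single: "single_deg (fst a + snd a) (basis2 a)"
  unfolding single_deg_def basis2_def by auto

lemma core_basis:
  "core_op Mset (basis2 (k0, j0)) (i, j) = (if i + j = k0 + j0 then of_real (Cn (k0 + j0) i k0) else 0)"
proof -
  let ?n = "k0 + j0"
  have b: "of_real (Cn ?n i k) * basis2 (k0, j0) (k, ?n - k) = (if k = k0 then (of_real (Cn ?n i k0) :: complex) else 0)" for k
    unfolding basis2_def by auto
  have "(\<Sum>k\<le>?n. of_real (Cn ?n i k) * basis2 (k0, j0) (k, ?n - k)) = (of_real (Cn ?n i k0) :: complex)"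
    unfolding b by (subst sum.delta) auto
  thus ?thesis using core_single[OF basis_single[of "(k0,j0)", simplified]] by simp
qed

lemma core_basis_single: "single_deg (k0 + j0) (core_op Mset (basis2 (k0, j0)))"
  unfolding single_deg_def using core_basis by simp

lemma norm_core_basis: "(norm2 (core_op Mset (basis2 (k0, j0))))\<^sup>2 = (\<Sum>i\<le>k0+j0. (Cn (k0+j0) i k0)\<^sup>2)"
  unfolding norm2_single_deg_sq[OF core_basis_single] core_basis by simp

lemma trace_core_basis:
  "inner2 (core_op Mset (core_op Mset (basis2 (k0, j0)))) (basis2 (k0, j0)) = of_real (\<Sum>i\<le>k0+j0. (Cn (k0+j0) i k0)\<^sup>2)"
proof -
  let ?n = "k0 + j0"
  let ?X = "core_op Mset (core_op Mset (basis2 (k0, j0)))"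
  have Xv: "?X (i, j) = (if i + j = ?n then (\<Sum>k\<le>?n. of_real (Cn ?n i k) * of_real (Cn ?n k k0)) else 0)" for i j
    using core_single[OF core_basis_single[of k0 j0], of i j] by (simp add: core_basis)
  have Xs: "single_deg ?n ?X" unfolding single_deg_def using Xv by simp
  have b: "?X (i, ?n - i) * cnj (basis2 (k0, j0) (i, ?n - i)) = (if i = k0 then ?X (k0, j0) else 0)" for i
    unfolding basis2_def by auto
  have "inner2 ?X (basis2 (k0, j0)) = (\<Sum>i\<le>?n. ?X (i, ?n - i) * cnj (basis2 (k0, j0) (i, ?n - i)))"
    by (rule inner2_single_deg[OF Xs])
  also have "\<dots> = ?X (k0, j0)" unfolding b by (subst sum.delta) auto
  also have "\<dots> = (\<Sum>k\<le>?n. of_real (Cn ?n k0 k) * of_real (Cn ?n k k0))" using Xv by simp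
  also have "\<dots> = of_real (\<Sum>k\<le>?n. (Cn ?n k k0)\<^sup>2)"
    by (simp add: Cn_sym[of ?n k0] power2_eq_square)
  finally show ?thesis .
qed

theorem corollary3p1:
  shows "hilbert_schmidt (core_op (gen_submodule zw_sq))
    \<and> hs_norm_sq (core_op (gen_submodule zw_sq)) = 4/3 * pi\<^sup>2 - 9
    \<and> trace2 (core_op (gen_submodule zw_sq) \<circ> core_op (gen_submodule zw_sq))
        = complex_of_real (4/3 * pi\<^sup>2 - 9)"
proof -
  define S where "S = 4/3 * pi\<^sup>2 - 9"
  define g where "g a = (norm2 (core_op Mset (basis2 a)))\<^sup>2" for a
  have gv: "g (k, n - k) = (\<Sum>i\<le>n. (Cn n i k)\<^sup>2)" if "k \<le> n" for k n
    using norm_core_basis[of k "n - k"] that unfolding g_def by simp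
  have "(\<lambda>n. \<Sum>k\<le>n. g (k, n - k)) = hs"
    unfolding hs_def by (rule ext) (simp add: gv)
  hence "(\<lambda>n. \<Sum>k\<le>n. g (k, n - k)) sums S" unfolding S_def using hs_sums by simp
  hence gs: "(g has_sum S) UNIV"
    by (rule deg_has_sum_conv[rotated]) (simp add: g_def)
  have t: "inner2 ((core_op Mset \<circ> core_op Mset) (basis2 a)) (basis2 a) = of_real (g a)" for a
  proof -
    obtain k0 j0 where a: "a = (k0, j0)" by (cases a)
    show ?thesis unfolding a g_def norm_core_basis using trace_core_basis by simp
  qed
  have ts: "((\<lambda>a. inner2 ((core_op Mset \<circ> core_op Mset) (basis2 a)) (basis2 a)) has_sum of_real S) UNIV"
    unfolding t using gs by (subst has_sum_of_real_iff)
  show ?thesis unfolding gen_eq hilbert_schmidt_def hs_norm_sq_def trace2_def S_def[symmetric]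
  proof (intro conjI)
    show "(\<lambda>a. (norm2 (core_op Mset (basis2 a)))\<^sup>2) summable_on UNIV"
      using gs unfolding g_def by (rule has_sum_imp_summable)
    show "(\<Sum>\<^sub>\<infinity>a. (norm2 (core_op Mset (basis2 a)))\<^sup>2) = S"
      using gs unfolding g_def by (rule infsumI)
    show "(\<Sum>\<^sub>\<infinity>a. inner2 ((core_op Mset \<circ> core_op Mset) (basis2 a)) (basis2 a)) = complex_of_real S"
      using ts by (rule infsumI)
  qed
qed

end
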